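(* The log-exp-supremum is transitive: for all finite non-empty multi-sets $\mathcal X$ and $\mathcal Y$ of real symmetric $2\times2$ matrices, $$\mathrm{Sup}_{\mathrm{LE}}(\mathcal X\cup\mathcal Y)=\mathrm{Sup}_{\mathrm{LE}}\big(\{\mathrm{Sup}_{\mathrm{LE}}(\mathcal X),\mathrm{Sup}_{\mathrm{LE}}(\mathcal Y)\}\big),$$ where $\cup$ denotes multi-set union.
   Context: For a finite multi-set $\mathcal X=\{X_1,\dots,X_n\}$ of real symmetric $2\times2$ matrices, the log-exp-supremum is $\mathrm{Sup}_{\mathrm{LE}}(\mathcal X):=\lim_{m\to\infty}\frac1m\log\sum_{i=1}^n\exp(mX_i)$, with $\exp,\log$ the matrix exponential and logarithm. *)

theory Defs
  imports "HOL-Analysis.Analysis" "HOL-Library.Multiset"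
begin

fun mpow :: "real^'n^'n \<Rightarrow> nat \<Rightarrow> real^'n^'n" where
  "mpow A 0 = mat 1"
| "mpow A (Suc k) = A ** mpow A k"

definition mexp :: "real^'n^'n \<Rightarrow> real^'n^'n" where
  "mexp A = (\<Sum>k. (1 / fact k) *\<^sub>R mpow A k)"

definition mlog :: "real^'n^'n \<Rightarrow> real^'n^'n" where
  "mlog A = (THE L. transpose L = L \<and> mexp L = A)"

definition SupLE :: "(real^'n^'n) multiset \<Rightarrow> real^'n^'n" where
  "SupLE X = Lim at_top
     (\<lambda>m::real. (1 / m) *\<^sub>R mlog (\<Sum>\<^sub># (image_mset (\<lambda>Xi. mexp (m *\<^sub>R Xi)) X)))"

end

theory Submission
  imports Defs
begin


definition sym2 :: "real \<Rightarrow> real \<Rightarrow> real \<Rightarrow> real^2^2" where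
 "sym2 a b c = (\<chi> i j. if i = 1 then (if j = 1 then a else b) else (if j = 1 then b else c))"

lemma sym2_nth[simp]: "sym2 a b c $1$1 = a" "sym2 a b c $1$2 = b" "sym2 a b c $2$1 = b" "sym2 a b c $2$2 = c"
  by (simp_all add: sym2_def)

lemma mat_eq2: "(A::real^2^2) = B \<longleftrightarrow> A$1$1 = B$1$1 \<and> A$1$2 = B$1$2 \<and> A$2$1 = B$2$1 \<and> A$2$2 = B$2$2"
  unfolding vec_eq_iff forall_2 by blast

lemma vec_eq2: "(v::real^2) = w \<longleftrightarrow> (v$1) = (w$1) \<and> (v$2) = (w$2)"
  unfolding vec_eq_iff forall_2 by blast

lemma sym_sym2: assumes "transpose (A::real^2^2) = A" shows "A = sym2 (A$1$1) (A$1$2) (A$2$2)"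
proof -
  have "A$2$1 = A$1$2" using arg_cong[OF assms, of "\<lambda>M. M$1$2"] by (simp add: transpose_def)
  thus ?thesis by (simp add: mat_eq2)
qed

lemma mat1_sym2: "mat 1 = sym2 1 0 1" by (simp add: mat_eq2 mat_def)

lemma sym2_add: "sym2 a b c + sym2 a' b' c' = sym2 (a+a') (b+b') (c+c')" by (simp add: mat_eq2)
lemma sym2_scale: "r *\<^sub>R sym2 a b c = sym2 (r*a) (r*b) (r*c)" by (simp add: mat_eq2)
lemma sym2_diff: "sym2 a b c - sym2 a' b' c' = sym2 (a-a') (b-b') (c-c')" by (simp add: mat_eq2)
lemma sym2_zero: "0 = sym2 0 0 0" by (simp add: mat_eq2)
lemma transpose_sym2: "transpose (sym2 a b c) = sym2 a b c"
  by (simp add: mat_eq2 transpose_def)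
lemma sym2_mult: "sym2 a b c ** sym2 a' b' c' = (\<chi> i j. if i = 1 then (if j = 1 then a*a'+b*b' else a*b'+b*c') else (if j = 1 then b*a'+c*b' else b*b'+c*c'))"
  by (simp add: mat_eq2 matrix_matrix_mult_def sum_2)

definition outer :: "real^2 \<Rightarrow> real^2^2" where "outer v = sym2 ((v$1)^2) ((v$1)*(v$2)) ((v$2)^2)"
definition nrm :: "real^2 \<Rightarrow> real" where "nrm v = (v$1)^2 + (v$2)^2"
definition perp :: "real^2 \<Rightarrow> real^2" where "perp v = vector [-(v$2), (v$1)]"
definition cr :: "real^2 \<Rightarrow> real^2 \<Rightarrow> real" where "cr v w = (v$1)*(w$2) - (v$2)*(w$1)"
definition proj :: "real^2 \<Rightarrow> real^2^2" where "proj u = (1/nrm u) *\<^sub>R outer u"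

lemma perp_nth[simp]: "perp v $1 = -(v$2)" "perp v $2 = (v$1)" by (simp_all add: perp_def)
lemma nrm_perp[simp]: "nrm (perp v) = nrm v" by (simp add: nrm_def)
lemma nrm_pos: "v \<noteq> 0 \<Longrightarrow> nrm v > 0"
  by (cases "v$1 = 0") (auto simp: nrm_def vec_eq2 add_pos_nonneg add_nonneg_pos)
lemma perp_nz: "v \<noteq> 0 \<Longrightarrow> perp v \<noteq> 0" by (auto simp: vec_eq2)
lemma cr_perp: "cr v (perp v) = nrm v" by (simp add: cr_def nrm_def power2_eq_square)

lemma proj_sym2: "proj u = sym2 ((u$1)^2/nrm u) ((u$1)*(u$2)/nrm u) ((u$2)^2/nrm u)"
  by (simp add: proj_def outer_def sym2_scale)

lemma proj_add_perp: "u \<noteq> 0 \<Longrightarrow> proj u + proj (perp u) = mat 1"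
proof -
  assume "u \<noteq> 0"
  hence n: "nrm u > 0" by (rule nrm_pos)
  have "(u$1)^2/nrm u + (u$2)^2/nrm u = nrm u / nrm u" by (simp add: add_divide_distrib[symmetric] nrm_def)
  hence e1: "(u$1)^2/nrm u + (u$2)^2/nrm u = 1" using n by simp
  show ?thesis unfolding proj_sym2 sym2_add mat1_sym2 nrm_perp using e1 \<open>u \<noteq> 0\<close>
    by (auto simp: add_ac diff_divide_distrib[symmetric] vec_eq2)
qed


lemma proj_idem: assumes "u \<noteq> 0" shows "proj u ** proj u = proj u"
proof -
  have n: "(u$1)^2 + (u$2)^2 > 0" using nrm_pos assms by (auto simp: nrm_def)
  show ?thesis using n unfolding proj_sym2 sym2_mult nrm_def
    by (simp add: mat_eq2 divide_simps) (simp add: power2_eq_square algebra_simps eval_nat_numeral)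
qed

lemma proj_perp_idem: assumes "u \<noteq> 0" shows "proj (perp u) ** proj (perp u) = proj (perp u)"
  using proj_idem[OF perp_nz[OF assms]] .

lemma proj_orth: assumes "u \<noteq> 0" shows "proj u ** proj (perp u) = 0" "proj (perp u) ** proj u = 0"
proof -
  have n: "(u$1)^2 + (u$2)^2 > 0" using nrm_pos assms by (auto simp: nrm_def)
  show "proj u ** proj (perp u) = 0" using n unfolding proj_sym2 sym2_mult nrm_def nrm_perp
    by (simp add: mat_eq2 divide_simps) (simp add: power2_eq_square algebra_simps eval_nat_numeral)
  show "proj (perp u) ** proj u = 0" using n unfolding proj_sym2 sym2_mult nrm_def nrm_perp
    by (simp add: mat_eq2 divide_simps) (simp add: power2_eq_square algebra_simps eval_nat_numeral)
qed


lemma mm_radd: "((A::real^'n^'m) + B) ** C = A ** C + B ** C"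
  by (vector matrix_matrix_mult_def sum.distrib[symmetric] field_simps)

lemma mpow_PQ:
  assumes PP: "P ** P = P" and QQ: "Q ** Q = Q" and PQ: "P ** Q = 0" and QP: "Q ** P = 0"
    and I: "P + Q = mat 1"
  shows "mpow (x *\<^sub>R P + y *\<^sub>R Q) k = x^k *\<^sub>R P + y^k *\<^sub>R Q"
proof (induction k)
  case 0 show ?case using I by simp
next
  case (Suc k)
  have "mpow (x *\<^sub>R P + y *\<^sub>R Q) (Suc k) = (x *\<^sub>R P + y *\<^sub>R Q) ** (x^k *\<^sub>R P + y^k *\<^sub>R Q)"
    using Suc by simp
  also have "\<dots> = x^(Suc k) *\<^sub>R P + y^(Suc k) *\<^sub>R Q"
    by (simp add: matrix_add_ldistrib mm_radd matrix_scalar_ac scalar_matrix_assoc[symmetric] PP QQ PQ QP mult.commute)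
  finally show ?case .
qed

lemma mexp_PQ:
  assumes PP: "P ** P = P" and QQ: "Q ** Q = Q" and PQ: "P ** Q = 0" and QP: "Q ** P = 0"
    and I: "P + Q = mat 1"
  shows "mexp (x *\<^sub>R P + y *\<^sub>R Q) = exp x *\<^sub>R P + exp y *\<^sub>R Q"
proof -
  have eq: "(\<lambda>k. (1 / fact k) *\<^sub>R mpow (x *\<^sub>R P + y *\<^sub>R Q) k) =
     (\<lambda>k. (x^k /\<^sub>R fact k) *\<^sub>R P + (y^k /\<^sub>R fact k) *\<^sub>R Q)"
    by (rule ext, simp add: mpow_PQ[OF assms] scaleR_add_right divide_inverse_commute)
  have "(\<lambda>k. (x^k /\<^sub>R fact k) *\<^sub>R P + (y^k /\<^sub>R fact k) *\<^sub>R Q) sums (exp x *\<^sub>R P + exp y *\<^sub>R Q)"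
    by (intro sums_add sums_scaleR_left exp_converges)
  thus ?thesis unfolding mexp_def eq by (rule sums_unique[symmetric])
qed

lemma proj_PQ: assumes "u \<noteq> 0"
  shows "mexp (x *\<^sub>R proj u + y *\<^sub>R proj (perp u)) = exp x *\<^sub>R proj u + exp y *\<^sub>R proj (perp u)"
  by (rule mexp_PQ[OF proj_idem[OF assms] proj_perp_idem[OF assms] proj_orth[OF assms] proj_add_perp[OF assms]])


definition sq :: "real^2^2 \<Rightarrow> real" where "sq A = sqrt ((A$1$1 - A$2$2)^2 + 4*(A$1$2)^2)"
definition lam1 :: "real^2^2 \<Rightarrow> real" where "lam1 A = (A$1$1 + A$2$2 + sq A)/2"
definition lam2 :: "real^2^2 \<Rightarrow> real" where "lam2 A = (A$1$1 + A$2$2 - sq A)/2"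

lemma sq_nonneg: "sq A \<ge> 0" by (simp add: sq_def)
lemma lam_le: "lam2 A \<le> lam1 A" using sq_nonneg[of A] by (simp add: lam1_def lam2_def)

lemma eig_sym2: "\<exists>u. u \<noteq> 0 \<and> sym2 a b c = lam1 (sym2 a b c) *\<^sub>R proj u + lam2 (sym2 a b c) *\<^sub>R proj (perp u)"
proof -
  define s where "s = sqrt ((a-c)^2 + 4*b^2)"
  have s: "sq (sym2 a b c) = s" by (simp add: sq_def s_def)
  have s0: "s \<ge> 0" by (simp add: s_def)
  have s2: "s^2 = (a-c)^2 + 4*b^2" unfolding s_def by (simp add: add_nonneg_nonneg)
  define l1 where "l1 = (a + c + s)/2"
  define l2 where "l2 = (a + c - s)/2"
  have L: "lam1 (sym2 a b c) = l1" "lam2 (sym2 a b c) = l2" by (simp_all add: lam1_def lam2_def l1_def l2_def s)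
  show ?thesis
  proof (cases "b = 0")
    case True
    hence ss: "s = \<bar>a - c\<bar>" by (simp add: s_def)
    show ?thesis
    proof (cases "a \<ge> c")
      case True
      let ?u = "vector [1, 0] :: real^2"
      have "?u \<noteq> 0" by (simp add: vec_eq2)
      moreover have "sym2 a b c = l1 *\<^sub>R proj ?u + l2 *\<^sub>R proj (perp ?u)"
        using True \<open>b = 0\<close> ss by (simp add: proj_sym2 nrm_def sym2_scale sym2_add l1_def l2_def)
      ultimately show ?thesis unfolding L by blast
    next
      case False
      let ?u = "vector [0, 1] :: real^2"
      have "?u \<noteq> 0" by (simp add: vec_eq2)
      moreover have "sym2 a b c = l1 *\<^sub>R proj ?u + l2 *\<^sub>R proj (perp ?u)"
        using False \<open>b = 0\<close> ss by (simp add: proj_sym2 nrm_def sym2_scale sym2_add l1_def l2_def)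
      ultimately show ?thesis unfolding L by blast
    qed
  next
    case False
    define p where "p = l1 - a"
    define q where "q = a - l2"
    have pq: "p * q = b^2" unfolding p_def q_def l1_def l2_def
      using s2 by (simp add: power2_eq_square algebra_simps) (simp add: field_simps)
    have spq: "l1 - l2 = p + q" by (simp add: p_def q_def)
    have pc: "l1 - c = q" "c - l2 = p" by (simp_all add: p_def q_def l1_def l2_def field_simps)
    let ?u = "vector [b, p] :: real^2"
    have u0: "?u \<noteq> 0" using False by (simp add: vec_eq2)
    have N: "nrm ?u = b^2 + p^2" by (simp add: nrm_def)
    have Npos: "b^2 + p^2 > 0" using False by (simp add: add_pos_nonneg)
    have e11: "l1 * b^2 + l2 * p^2 = a * (b^2 + p^2)"
    proof -
      have "(l1 - a) * b^2 = (a - l2) * p^2" unfolding p_def[symmetric] q_def[symmetric]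
        using pq by (simp add: power2_eq_square) (metis mult.assoc mult.commute)
      thus ?thesis by (simp add: algebra_simps)
    qed
    have e12: "l1 * (b * p) - l2 * (p * b) = b * (b^2 + p^2)"
    proof -
      have "(l1 - l2) * p = b^2 + p^2" unfolding spq using pq by (simp add: power2_eq_square algebra_simps)
      thus ?thesis by (simp add: algebra_simps power2_eq_square)
    qed
    have e22: "l1 * p^2 + l2 * b^2 = c * (b^2 + p^2)"
    proof -
      have "(l1 - c) * p^2 = (c - l2) * b^2" unfolding pc
        using pq by (simp add: power2_eq_square) (metis mult.assoc mult.commute)
      thus ?thesis by (simp add: algebra_simps)
    qed
    have N0: "b^2 + p^2 \<noteq> 0" using Npos by linarith
    have x1: "l1 * (b^2 / (b^2 + p^2)) + l2 * ((-p)^2 / (b^2 + p^2)) = a"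
      using e11 N0 by (auto simp: divide_simps)
    have x2: "l1 * (b * p / (b^2 + p^2)) + l2 * ((- p) * b / (b^2 + p^2)) = b"
      using e12 N0 by (auto simp: divide_simps algebra_simps)
    have x3: "l1 * (p^2 / (b^2 + p^2)) + l2 * (b^2 / (b^2 + p^2)) = c"
      using e22 N0 by (auto simp: divide_simps)
    have "sym2 a b c = l1 *\<^sub>R proj ?u + l2 *\<^sub>R proj (perp ?u)"
      unfolding proj_sym2 nrm_perp N sym2_scale sym2_add
      by (simp only: perp_nth vector_2 x1 x2 x3)
    thus ?thesis unfolding L using u0 by blast
  qed
qed

lemma eig: assumes "transpose A = A"
  shows "\<exists>u. u \<noteq> 0 \<and> A = lam1 A *\<^sub>R proj u + lam2 A *\<^sub>R proj (perp u)"
  using eig_sym2[of "A$1$1" "A$1$2" "A$2$2"] sym_sym2[OF assms] by metis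


definition glog :: "real^2^2 \<Rightarrow> real^2^2" where
  "glog A = (if lam1 A = lam2 A then ln (lam1 A) *\<^sub>R mat 1
     else ln (lam2 A) *\<^sub>R mat 1 + ((ln (lam1 A) - ln (lam2 A)) / (lam1 A - lam2 A)) *\<^sub>R (A - lam2 A *\<^sub>R mat 1))"

lemma decomp_alt: assumes "u \<noteq> 0"
  shows "x *\<^sub>R proj u + y *\<^sub>R proj (perp u) = y *\<^sub>R mat 1 + (x - y) *\<^sub>R proj u"
proof -
  have "y *\<^sub>R mat 1 = y *\<^sub>R proj u + y *\<^sub>R proj (perp u)" using proj_add_perp[OF assms] by (metis scaleR_add_right)
  thus ?thesis by (simp add: algebra_simps)
qed

lemma lam_proj: assumes u: "u \<noteq> 0" and ab: "\<alpha> \<ge> \<beta>"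
  shows "lam1 (\<alpha> *\<^sub>R proj u + \<beta> *\<^sub>R proj (perp u)) = \<alpha>"
    "lam2 (\<alpha> *\<^sub>R proj u + \<beta> *\<^sub>R proj (perp u)) = \<beta>"
proof -
  define N where "N = nrm u"
  have N: "N > 0" using nrm_pos[OF u] by (simp add: N_def)
  define x where "x = (u$1)^2/N"
  define y where "y = (u$2)^2/N"
  define z where "z = (u$1)*(u$2)/N"
  have "x + y = N / N" by (simp add: x_def y_def N_def nrm_def add_divide_distrib[symmetric])
  hence xy: "x + y = 1" using N by simp
  have z2: "z^2 = x * y" by (simp add: x_def y_def z_def power2_eq_square)
  have A: "\<alpha> *\<^sub>R proj u + \<beta> *\<^sub>R proj (perp u) = sym2 (\<alpha>*x + \<beta>*y) ((\<alpha>-\<beta>)*z) (\<alpha>*y + \<beta>*x)"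
    unfolding proj_sym2 sym2_scale sym2_add
    by (simp add: x_def y_def z_def N_def algebra_simps diff_divide_distrib)
  have "(\<alpha>*x + \<beta>*y - (\<alpha>*y + \<beta>*x))^2 + 4*((\<alpha>-\<beta>)*z)^2 = (\<alpha>-\<beta>)^2 * ((x-y)^2 + 4*z^2)"
    by (simp add: power2_eq_square algebra_simps)
  also have "\<dots> = (\<alpha>-\<beta>)^2 * (x+y)^2" unfolding z2 by (simp add: power2_eq_square algebra_simps)
  finally have sqv: "sq (\<alpha> *\<^sub>R proj u + \<beta> *\<^sub>R proj (perp u)) = \<alpha> - \<beta>"
    unfolding A sq_def using xy ab by simp
  have "\<alpha>*x + \<beta>*y + (\<alpha>*y + \<beta>*x) = (\<alpha>+\<beta>)*(x+y)" by (simp add: algebra_simps)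
  hence sxy: "\<alpha>*x + \<beta>*y + (\<alpha>*y + \<beta>*x) = \<alpha>+\<beta>" using xy by simp
  thus "lam1 (\<alpha> *\<^sub>R proj u + \<beta> *\<^sub>R proj (perp u)) = \<alpha>"
    "lam2 (\<alpha> *\<^sub>R proj u + \<beta> *\<^sub>R proj (perp u)) = \<beta>"
    unfolding lam1_def lam2_def sqv unfolding A sym2_nth sxy by simp_all
qed

lemma glog_proj: assumes u: "u \<noteq> 0" and ab: "\<alpha> \<ge> \<beta>" "\<beta> > 0"
  shows "glog (\<alpha> *\<^sub>R proj u + \<beta> *\<^sub>R proj (perp u)) = ln \<alpha> *\<^sub>R proj u + ln \<beta> *\<^sub>R proj (perp u)"
proof (cases "\<alpha> = \<beta>")
  case True
  thus ?thesis unfolding glog_def lam_proj[OF u ab(1)]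
    by (simp add: decomp_alt[OF u])
next
  case False
  hence ne: "\<alpha> - \<beta> \<noteq> 0" by simp
  have "glog (\<alpha> *\<^sub>R proj u + \<beta> *\<^sub>R proj (perp u)) =
     ln \<beta> *\<^sub>R mat 1 + ((ln \<alpha> - ln \<beta>) / (\<alpha> - \<beta>)) *\<^sub>R ((\<alpha> - \<beta>) *\<^sub>R proj u)"
    unfolding glog_def lam_proj[OF u ab(1)] using False by (simp add: decomp_alt[OF u])
  also have "\<dots> = ln \<beta> *\<^sub>R mat 1 + (ln \<alpha> - ln \<beta>) *\<^sub>R proj u" using ne by simp
  also have "\<dots> = ln \<alpha> *\<^sub>R proj u + ln \<beta> *\<^sub>R proj (perp u)" by (simp add: decomp_alt[OF u])
  finally show ?thesis .
qed

lemma transpose_proj: "transpose (proj u) = proj u" by (simp add: proj_sym2 transpose_sym2)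

lemma mlog_glog: assumes sym: "transpose A = A" and pos: "lam2 A > 0"
  shows "mlog A = glog A"
proof -
  obtain u where u: "u \<noteq> 0" and A: "A = lam1 A *\<^sub>R proj u + lam2 A *\<^sub>R proj (perp u)"
    using eig[OF sym] by blast
  define L0 where "L0 = ln (lam1 A) *\<^sub>R proj u + ln (lam2 A) *\<^sub>R proj (perp u)"
  have pos1: "lam1 A > 0" using pos lam_le[of A] by linarith
  have gA: "glog A = L0" unfolding L0_def by (subst A, rule glog_proj[OF u lam_le pos])
  have "(THE L. transpose L = L \<and> mexp L = A) = L0"
  proof (rule the_equality)
    have "transpose L0 = L0" unfolding L0_def proj_sym2 sym2_scale sym2_add transpose_sym2 by simp
    moreover have "mexp L0 = lam1 A *\<^sub>R proj u + lam2 A *\<^sub>R proj (perp u)"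
      unfolding L0_def proj_PQ[OF u] using pos pos1 by simp
    ultimately show "transpose L0 = L0 \<and> mexp L0 = A" using A by simp
  next
    fix L assume L: "transpose L = L \<and> mexp L = A"
    obtain w where w: "w \<noteq> 0" and LL: "L = lam1 L *\<^sub>R proj w + lam2 L *\<^sub>R proj (perp w)"
      using eig L by blast
    have "A = exp (lam1 L) *\<^sub>R proj w + exp (lam2 L) *\<^sub>R proj (perp w)"
      using L LL proj_PQ[OF w] by metis
    hence "glog A = L" using glog_proj[OF w _ exp_gt_zero] lam_le[of L] LL by simp
    thus "L = L0" using gA by simp
  qed
  thus ?thesis using gA unfolding mlog_def by simp
qed



lemma exp_neg_lim: assumes "d < 0" shows "((\<lambda>m::real. exp (m * d)) \<longlongrightarrow> 0) at_top"
proof -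
  have "filterlim (\<lambda>m::real. d * m) at_bot at_top"
    by (rule filterlim_tendsto_neg_mult_at_bot[OF tendsto_const assms filterlim_ident])
  hence "filterlim (\<lambda>m::real. m * d) at_bot at_top" by (simp add: mult.commute)
  thus ?thesis by (rule filterlim_compose[OF exp_at_bot])
qed

lemma inv_m_lim: "((\<lambda>m::real. c / m) \<longlongrightarrow> 0) at_top"
  by (intro tendsto_divide_0[OF tendsto_const] filterlim_at_top_imp_at_infinity filterlim_ident)

lemma growth_lim:
  fixes f :: "real \<Rightarrow> real"
  assumes ev: "eventually (\<lambda>m. \<alpha> * exp (m * R) \<le> f m \<and> f m \<le> \<beta> * exp (m * R)) at_top"
    and a: "\<alpha> > 0" and b: "\<beta> > 0"
  shows "((\<lambda>m. ln (f m) / m) \<longlongrightarrow> R) at_top"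
proof (rule tendsto_sandwich)
  show "((\<lambda>m. ln \<alpha> / m + R) \<longlongrightarrow> R) at_top" using tendsto_add[OF inv_m_lim tendsto_const] by simp
  show "((\<lambda>m. ln \<beta> / m + R) \<longlongrightarrow> R) at_top" using tendsto_add[OF inv_m_lim tendsto_const] by simp
  have ev2: "eventually (\<lambda>m. (\<alpha> * exp (m * R) \<le> f m \<and> f m \<le> \<beta> * exp (m * R)) \<and> m > 0) at_top"
    using ev eventually_gt_at_top[of 0] by (rule eventually_conj)
  show "eventually (\<lambda>m. ln \<alpha> / m + R \<le> ln (f m) / m) at_top"
  proof (rule eventually_mono[OF ev2], clarify)
    fix m :: real assume h: "\<alpha> * exp (m * R) \<le> f m" "m > 0"
    have p1: "\<alpha> * exp (m * R) > 0" using a by simp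
    hence "f m > 0" using h by linarith
    hence "ln (\<alpha> * exp (m * R)) \<le> ln (f m)" using h p1 by simp
    hence "ln \<alpha> + m * R \<le> ln (f m)" using a by (simp add: ln_mult)
    hence "(ln \<alpha> + m * R) / m \<le> ln (f m) / m" using h(2) by (intro divide_right_mono) auto
    thus "ln \<alpha> / m + R \<le> ln (f m) / m" using h(2) by (simp add: add_divide_distrib)
  qed
  show "eventually (\<lambda>m. ln (f m) / m \<le> ln \<beta> / m + R) at_top"
  proof (rule eventually_mono[OF ev2], clarify)
    fix m :: real assume h: "\<alpha> * exp (m * R) \<le> f m" "f m \<le> \<beta> * exp (m * R)" "m > 0"
    have p1: "\<alpha> * exp (m * R) > 0" using a by simp
    hence fp: "f m > 0" using h by linarith
    have p2: "\<beta> * exp (m * R) > 0" using b by simp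
    have "ln (f m) \<le> ln (\<beta> * exp (m * R))" using h fp p2 by simp
    hence "ln (f m) \<le> ln \<beta> + m * R" using b by (simp add: ln_mult)
    hence "ln (f m) / m \<le> (ln \<beta> + m * R) / m" using h(3) by (intro divide_right_mono) auto
    thus "ln (f m) / m \<le> ln \<beta> / m + R" using h(3) by (simp add: add_divide_distrib)
  qed
qed

lemma tendsto_sym2:
  assumes "(f \<longlongrightarrow> a) F" "(g \<longlongrightarrow> b) F" "(h \<longlongrightarrow> c) F"
  shows "((\<lambda>m. sym2 (f m) (g m) (h m)) \<longlongrightarrow> sym2 a b c) F"
proof -
  define E1 where "E1 = sym2 1 0 0"
  define E2 where "E2 = sym2 0 1 0"
  define E3 where "E3 = sym2 0 0 1"
  have e: "\<And>x y z. sym2 x y z = x *\<^sub>R E1 + y *\<^sub>R E2 + z *\<^sub>R E3"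
    by (simp add: mat_eq2 E1_def E2_def E3_def)
  show ?thesis unfolding e by (rule tendsto_add[OF tendsto_add[OF tendsto_scaleR[OF assms(1) tendsto_const] tendsto_scaleR[OF assms(2) tendsto_const]] tendsto_scaleR[OF assms(3) tendsto_const]])
qed

lemma bounded_mult_lim:
  fixes \<psi> q :: "real \<Rightarrow> real"
  assumes psi: "(\<psi> \<longlongrightarrow> \<gamma>) F" and bd: "eventually (\<lambda>m. \<bar>q m\<bar> \<le> 1) F"
    and q: "\<gamma> \<noteq> 0 \<Longrightarrow> (q \<longlongrightarrow> p) F"
  shows "((\<lambda>m. \<psi> m * q m) \<longlongrightarrow> \<gamma> * p) F"
proof (cases "\<gamma> = 0")
  case True
  have "((\<lambda>m. \<psi> m * q m) \<longlongrightarrow> 0) F"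
    by (rule tendsto_0_le[OF psi[unfolded True], of _ 1]) (rule eventually_mono[OF bd], simp add: abs_mult mult_left_le)
  thus ?thesis using True by simp
next
  case False thus ?thesis using tendsto_mult[OF psi q] by simp
qed



datatype dat = Dat (ee: real) (cw: real) (vv: "real^2")

definition FF :: "dat list \<Rightarrow> real \<Rightarrow> real^2^2" where
  "FF D m = sum_list (map (\<lambda>d. (cw d * exp (m * ee d)) *\<^sub>R outer (vv d)) D)"

lemma FF_append: "FF (D1 @ D2) m = FF D1 m + FF D2 m" by (simp add: FF_def)

definition valid :: "dat list \<Rightarrow> bool" where
 "valid D \<longleftrightarrow> D \<noteq> [] \<and> (\<forall>d\<in>set D. cw d > 0 \<and> vv d \<noteq> 0) \<and> (\<exists>d1\<in>set D. \<exists>d2\<in>set D. cr (vv d1) (vv d2) \<noteq> 0)"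

definition MM :: "dat list \<Rightarrow> real" where "MM D = Max (ee ` set D)"
definition pairs :: "dat list \<Rightarrow> real set" where
  "pairs D = (\<lambda>(d1, d2). ee d1 + ee d2) ` {p \<in> set D \<times> set D. cr (vv (fst p)) (vv (snd p)) \<noteq> 0}"
definition KK :: "dat list \<Rightarrow> real" where "KK D = Max (pairs D)"
definition LL :: "dat list \<Rightarrow> real" where "LL D = KK D - MM D"
definition top :: "dat list \<Rightarrow> dat" where "top D = (SOME d. d \<in> set D \<and> ee d = MM D)"
definition ut :: "dat list \<Rightarrow> real^2" where "ut D = vv (top D)"
definition SS :: "dat list \<Rightarrow> real^2^2" where
  "SS D = MM D *\<^sub>R proj (ut D) + LL D *\<^sub>R proj (perp (ut D))"

lemma cr_swap: "cr v w = - cr w v" by (simp add: cr_def)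
lemma cr_self: "cr v v = 0" by (simp add: cr_def)

context fixes D assumes vD: "valid D"
begin

lemma M_ge: "d \<in> set D \<Longrightarrow> ee d \<le> MM D"
  unfolding MM_def by (rule Max_ge) auto

lemma top_in: "top D \<in> set D" "ee (top D) = MM D"
proof -
  have "MM D \<in> ee ` set D" unfolding MM_def using vD by (intro Max_in) (auto simp: valid_def)
  hence "\<exists>d. d \<in> set D \<and> ee d = MM D" by auto
  hence "top D \<in> set D \<and> ee (top D) = MM D" unfolding top_def by (rule someI_ex)
  thus "top D \<in> set D" "ee (top D) = MM D" by auto
qed

lemma ut_nz: "ut D \<noteq> 0" using top_in vD by (auto simp: valid_def ut_def)

lemma pairs_fin: "finite (pairs D)" unfolding pairs_def by auto
lemma pairs_ne: "pairs D \<noteq> {}" using vD unfolding pairs_def valid_def by auto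

lemma K_ge: "d1 \<in> set D \<Longrightarrow> d2 \<in> set D \<Longrightarrow> cr (vv d1) (vv d2) \<noteq> 0 \<Longrightarrow> ee d1 + ee d2 \<le> KK D"
  unfolding KK_def by (rule Max_ge[OF pairs_fin]) (force simp: pairs_def)

lemma K_in: "\<exists>d1\<in>set D. \<exists>d2\<in>set D. cr (vv d1) (vv d2) \<noteq> 0 \<and> ee d1 + ee d2 = KK D"
proof -
  have "KK D \<in> pairs D" unfolding KK_def by (rule Max_in[OF pairs_fin pairs_ne])
  thus ?thesis unfolding pairs_def by force
qed

lemma L_le_M: "LL D \<le> MM D"
proof -
  obtain d1 d2 where d: "d1 \<in> set D" "d2 \<in> set D" "ee d1 + ee d2 = KK D"
    using K_in by blast
  thus ?thesis using M_ge[OF d(1)] M_ge[OF d(2)] unfolding LL_def by linarith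
qed

lemma F4: "d \<in> set D \<Longrightarrow> cr (vv d) (ut D) \<noteq> 0 \<Longrightarrow> ee d \<le> LL D"
  using K_ge[of d "top D"] top_in unfolding LL_def ut_def by auto

lemma F5: "LL D < MM D \<Longrightarrow> d \<in> set D \<Longrightarrow> ee d = MM D \<Longrightarrow> cr (vv d) (ut D) = 0"
  using F4 by fastforce

lemma F6: "\<exists>d1\<in>set D. \<exists>d2\<in>set D. cr (vv d1) (vv d2) \<noteq> 0 \<and> ee d1 \<ge> LL D \<and> ee d2 \<ge> LL D"
proof -
  obtain d1 d2 where d: "d1 \<in> set D" "d2 \<in> set D" "cr (vv d1) (vv d2) \<noteq> 0" "ee d1 + ee d2 = KK D"
    using K_in by blast
  have "ee d1 \<le> MM D" "ee d2 \<le> MM D" using d M_ge by auto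
  thus ?thesis using d unfolding LL_def by (intro bexI[of _ d1] bexI[of _ d2]) auto
qed

end



definition wt :: "dat list \<Rightarrow> nat \<Rightarrow> real \<Rightarrow> real" where "wt D i m = cw (D!i) * exp (m * ee (D!i))"
definition X :: "dat list \<Rightarrow> nat \<Rightarrow> real" where "X D i = vv (D!i) $ 1"
definition Y :: "dat list \<Rightarrow> nat \<Rightarrow> real" where "Y D i = vv (D!i) $ 2"
definition aa where "aa D m = (\<Sum>i<length D. wt D i m * (X D i)^2)"
definition bb where "bb D m = (\<Sum>i<length D. wt D i m * (X D i * Y D i))"
definition cc where "cc D m = (\<Sum>i<length D. wt D i m * (Y D i)^2)"

lemma sum_sym2: "(\<Sum>i\<in>A. sym2 (f i) (g i) (h i)) = sym2 (\<Sum>i\<in>A. f i) (\<Sum>i\<in>A. g i) (\<Sum>i\<in>A. h i)"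
  by (simp add: mat_eq2)

lemma FF_sym2: "FF D m = sym2 (aa D m) (bb D m) (cc D m)"
proof -
  have "FF D m = (\<Sum>i<length D. wt D i m *\<^sub>R outer (vv (D!i)))"
    unfolding FF_def sum_list_sum_nth by (simp add: atLeast0LessThan wt_def)
  also have "\<dots> = (\<Sum>i<length D. sym2 (wt D i m * (X D i)^2) (wt D i m * (X D i * Y D i)) (wt D i m * (Y D i)^2))"
    by (simp add: outer_def sym2_scale X_def Y_def)
  finally show ?thesis unfolding sum_sym2 aa_def bb_def cc_def .
qed

lemma det_identity:
  "aa D m * cc D m - (bb D m)^2 = (1/2) * (\<Sum>i<length D. \<Sum>j<length D. wt D i m * wt D j m * (X D i * Y D j - Y D i * X D j)^2)"
proof -
  let ?n = "length D"
  let ?w = "\<lambda>i. wt D i m" and ?x = "X D" and ?y = "Y D"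
  have ac: "aa D m * cc D m = (\<Sum>i<?n. \<Sum>j<?n. ?w i * ?w j * ((?x i)^2 * (?y j)^2))"
    unfolding aa_def cc_def sum_product by (simp add: mult_ac)
  have ca: "aa D m * cc D m = (\<Sum>i<?n. \<Sum>j<?n. ?w i * ?w j * ((?y i)^2 * (?x j)^2))"
    unfolding aa_def cc_def sum_product by (subst sum.swap) (simp add: mult_ac)
  have b2: "(bb D m)^2 = (\<Sum>i<?n. \<Sum>j<?n. ?w i * ?w j * (?x i * ?y i * ?x j * ?y j))"
    unfolding bb_def power2_eq_square sum_product by (simp add: mult_ac)
  have "(\<Sum>i<?n. \<Sum>j<?n. ?w i * ?w j * (?x i * ?y j - ?y i * ?x j)^2) =
     (\<Sum>i<?n. \<Sum>j<?n. ?w i * ?w j * ((?x i)^2 * (?y j)^2) + ?w i * ?w j * ((?y i)^2 * (?x j)^2)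
        - 2 * (?w i * ?w j * (?x i * ?y i * ?x j * ?y j)))"
    by (intro sum.cong refl) (simp add: power2_eq_square algebra_simps)
  also have "\<dots> = aa D m * cc D m + aa D m * cc D m - 2 * (bb D m)^2"
    unfolding sum.distrib sum_subtractf sum_distrib_left[symmetric] ac[symmetric] ca[symmetric] b2 by simp
  finally show ?thesis by simp
qed

context fixes D assumes vD: "valid D"
begin

lemma in_D: "i < length D \<Longrightarrow> D!i \<in> set D" by simp
lemma cw_pos: "i < length D \<Longrightarrow> cw (D!i) > 0" using vD by (auto simp: valid_def)
lemma v_nz: "i < length D \<Longrightarrow> vv (D!i) \<noteq> 0" using vD by (auto simp: valid_def)
lemma wt_pos: "i < length D \<Longrightarrow> wt D i m > 0" using cw_pos by (simp add: wt_def)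

lemma idx: "d \<in> set D \<Longrightarrow> \<exists>i<length D. D!i = d" by (simp add: in_set_conv_nth)

lemma nrmXY: "nrm (vv (D!i)) = (X D i)^2 + (Y D i)^2" by (simp add: nrm_def X_def Y_def)
lemma crXY: "cr (vv (D!i)) (vv (D!j)) = X D i * Y D j - Y D i * X D j" by (simp add: cr_def X_def Y_def)

definition tc where "tc = (\<Sum>i<length D. cw (D!i) * nrm (vv (D!i)))"
definition dc where "dc = (1/2) * (\<Sum>i<length D. \<Sum>j<length D. cw (D!i) * cw (D!j) * (cr (vv (D!i)) (vv (D!j)))^2)"

lemma trace_eq: "aa D m + cc D m = (\<Sum>i<length D. wt D i m * nrm (vv (D!i)))"
  unfolding aa_def cc_def sum.distrib[symmetric] nrmXY by (simp add: algebra_simps)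

lemma det_eq: "aa D m * cc D m - (bb D m)^2 =
   (1/2) * (\<Sum>i<length D. \<Sum>j<length D. cw (D!i) * cw (D!j) * (cr (vv (D!i)) (vv (D!j)))^2 * exp (m * (ee (D!i) + ee (D!j))))"
  unfolding det_identity crXY wt_def by (simp add: exp_add[symmetric] algebra_simps)

lemma tr_upper: "m \<ge> 0 \<Longrightarrow> aa D m + cc D m \<le> tc * exp (m * MM D)"
  unfolding trace_eq tc_def sum_distrib_right wt_def
proof (intro sum_mono)
  fix i assume m: "m \<ge> 0" and i: "i \<in> {..<length D}"
  have "exp (m * ee (D!i)) \<le> exp (m * MM D)" using M_ge[OF vD in_D] i m by (simp add: mult_left_mono)
  thus "cw (D ! i) * exp (m * ee (D ! i)) * nrm (vv (D ! i)) \<le> cw (D ! i) * nrm (vv (D ! i)) * exp (m * MM D)"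
    using cw_pos[of i] nrm_pos[OF v_nz[of i]] i by (simp add: mult_left_mono mult_ac)
qed

lemma tr_lower: "cw (top D) * nrm (ut D) * exp (m * MM D) \<le> aa D m + cc D m"
proof -
  obtain k where k: "k < length D" "D!k = top D" using idx top_in(1)[OF vD] by blast
  have "wt D k m * nrm (vv (D!k)) \<le> (\<Sum>i<length D. wt D i m * nrm (vv (D!i)))"
    by (rule member_le_sum) (use k wt_pos nrm_pos v_nz in \<open>auto intro!: mult_nonneg_nonneg less_imp_le\<close>)
  thus ?thesis unfolding trace_eq using k top_in(2)[OF vD] by (simp add: wt_def ut_def mult_ac)
qed


lemma det_upper: assumes m: "m \<ge> 0" shows "aa D m * cc D m - (bb D m)^2 \<le> dc * exp (m * KK D)"
proof -
  have le: "cw (D!i) * cw (D!j) * (cr (vv (D!i)) (vv (D!j)))^2 * exp (m * (ee (D!i) + ee (D!j)))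
      \<le> cw (D!i) * cw (D!j) * (cr (vv (D!i)) (vv (D!j)))^2 * exp (m * KK D)"
    if ij: "i < length D" "j < length D" for i j
  proof (cases "cr (vv (D!i)) (vv (D!j)) = 0")
    case True thus ?thesis by simp
  next
    case False
    have "ee (D!i) + ee (D!j) \<le> KK D" using K_ge[OF vD in_D in_D False] ij by auto
    hence "exp (m * (ee (D!i) + ee (D!j))) \<le> exp (m * KK D)" using m by (simp add: mult_left_mono)
    moreover have "cw (D!i) * cw (D!j) * (cr (vv (D!i)) (vv (D!j)))^2 \<ge> 0"
      using cw_pos[of i] cw_pos[of j] ij by simp
    ultimately show ?thesis by (rule mult_left_mono)
  qed
  have S: "(\<Sum>i<length D. \<Sum>j<length D. cw (D!i) * cw (D!j) * (cr (vv (D!i)) (vv (D!j)))^2 * exp (m * (ee (D!i) + ee (D!j))))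
     \<le> (\<Sum>i<length D. \<Sum>j<length D. cw (D!i) * cw (D!j) * (cr (vv (D!i)) (vv (D!j)))^2 * exp (m * KK D))"
    by (rule sum_mono, rule sum_mono, rule le) auto
  have eq: "dc * exp (m * KK D) = (1/2) * (\<Sum>i<length D. \<Sum>j<length D. cw (D!i) * cw (D!j) * (cr (vv (D!i)) (vv (D!j)))^2 * exp (m * KK D))"
    unfolding dc_def by (simp add: sum_distrib_right mult.assoc)
  show ?thesis unfolding det_eq eq by (rule mult_left_mono[OF S]) simp
qed

definition d0 where "d0 = (SOME r. r > 0 \<and> (\<forall>m. r * exp (m * KK D) \<le> aa D m * cc D m - (bb D m)^2))"

lemma det_lower_ex: "\<exists>r. r > 0 \<and> (\<forall>m. r * exp (m * KK D) \<le> aa D m * cc D m - (bb D m)^2)"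
proof -
  obtain d1 d2 where d: "d1 \<in> set D" "d2 \<in> set D" "cr (vv d1) (vv d2) \<noteq> 0" "ee d1 + ee d2 = KK D"
    using K_in[OF vD] by blast
  obtain i j where ij: "i < length D" "D!i = d1" "j < length D" "D!j = d2" using idx d by metis
  define f where "f = (\<lambda>m i j. cw (D!i) * cw (D!j) * (cr (vv (D!i)) (vv (D!j)))^2 * exp (m * (ee (D!i) + ee (D!j))))"
  have nn: "f m i j \<ge> 0" if "i < length D" "j < length D" for m i j
  proof -
    have "cw (D!i) > 0" "cw (D!j) > 0" using that by (simp_all add: cw_pos)
    thus "f m i j \<ge> 0" unfolding f_def by simp
  qed
  define r where "r = (1/2) * (cw d1 * cw d2 * (cr (vv d1) (vv d2))^2)"
  have "r > 0" unfolding r_def using d cw_pos ij by auto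
  moreover have "r * exp (m * KK D) \<le> aa D m * cc D m - (bb D m)^2" for m
  proof -
    have "f m i j \<le> (\<Sum>j<length D. f m i j)" by (rule member_le_sum) (use ij nn in auto)
    also have "\<dots> \<le> (\<Sum>i<length D. \<Sum>j<length D. f m i j)"
      by (rule member_le_sum[where f = "\<lambda>i. \<Sum>j<length D. f m i j"]) (use ij nn in \<open>auto intro!: sum_nonneg\<close>)
    finally have "f m i j \<le> (\<Sum>i<length D. \<Sum>j<length D. f m i j)" .
    thus ?thesis unfolding det_eq r_def f_def using ij d by simp
  qed
  ultimately show ?thesis by blast
qed

lemma d0: "d0 > 0" "r * exp (m * KK D) \<le> aa D m * cc D m - (bb D m)^2" if "r = d0"
  using someI_ex[OF det_lower_ex] that unfolding d0_def by auto

lemma d0_pos: "d0 > 0" using d0 by auto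
lemma det_lower: "d0 * exp (m * KK D) \<le> aa D m * cc D m - (bb D m)^2" using d0 by auto

lemma c0_pos: "cw (top D) * nrm (ut D) > 0"
  using top_in[OF vD] vD ut_nz[OF vD] nrm_pos by (auto simp: valid_def)

lemma det_pos: "aa D m * cc D m - (bb D m)^2 > 0"
  using det_lower[of m] d0_pos by (smt (verit) exp_gt_zero mult_pos_pos)
lemma tr_pos: "aa D m + cc D m > 0"
  using tr_lower[of m] c0_pos by (smt (verit) exp_gt_zero mult_pos_pos)

lemma dc_pos: "dc > 0" using det_upper[of 0] det_pos[of 0] by simp
lemma tc_pos: "tc > 0" using tr_upper[of 0] tr_pos[of 0] by simp

end

lemma eig_real:
  fixes a b c :: real
  assumes t: "a + c > 0" and d: "a * c - b^2 > 0"
  defines "s \<equiv> sqrt ((a - c)^2 + 4 * b^2)"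
  shows "0 \<le> s" "s < a + c" "((a+c+s)/2) * ((a+c-s)/2) = a * c - b^2"
    "(a + c)/2 \<le> (a+c+s)/2" "(a+c+s)/2 \<le> a + c" "(a+c-s)/2 > 0"
proof -
  show s0: "0 \<le> s" by (simp add: s_def)
  have s2: "s^2 = (a - c)^2 + 4 * b^2" unfolding s_def by simp
  have "s^2 < (a + c)^2" unfolding s2 using d by (simp add: power2_eq_square algebra_simps)
  thus sl: "s < a + c" using s0 t by (smt (verit) power_mono)
  show "((a+c+s)/2) * ((a+c-s)/2) = a * c - b^2"
    using s2 by (simp add: power2_eq_square field_simps)
  show "(a + c)/2 \<le> (a+c+s)/2" "(a+c+s)/2 \<le> a + c" "(a+c-s)/2 > 0" using s0 sl by auto
qed

lemma lam_sym2: "lam1 (sym2 a b c) = (a + c + sqrt ((a - c)^2 + 4 * b^2))/2"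
   "lam2 (sym2 a b c) = (a + c - sqrt ((a - c)^2 + 4 * b^2))/2"
  by (simp_all add: lam1_def lam2_def sq_def)



definition l1 where "l1 D m = lam1 (FF D m)"
definition l2 where "l2 D m = lam2 (FF D m)"

lemma half_le: "(x::real) \<le> s \<Longrightarrow> s/2 \<le> y \<Longrightarrow> x/2 \<le> y" by linarith
lemma half_pos: "(s::real) > 0 \<Longrightarrow> s/2 \<le> y \<Longrightarrow> 0 < y" by linarith

context fixes D assumes vD: "valid D"
begin

lemma lvals: "l1 D m = (aa D m + cc D m + sqrt ((aa D m - cc D m)^2 + 4 * (bb D m)^2))/2"
   "l2 D m = (aa D m + cc D m - sqrt ((aa D m - cc D m)^2 + 4 * (bb D m)^2))/2"
  unfolding l1_def l2_def FF_sym2 lam_sym2 by simp_all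

lemma lfacts: "l2 D m > 0" "(aa D m + cc D m)/2 \<le> l1 D m" "l1 D m \<le> aa D m + cc D m"
   "l1 D m * l2 D m = aa D m * cc D m - (bb D m)^2" "l1 D m + l2 D m = aa D m + cc D m"
proof -
  note E = eig_real[OF tr_pos[OF vD] det_pos[OF vD], of m]
  show "l2 D m > 0" unfolding lvals by (rule E(6))
  show "(aa D m + cc D m)/2 \<le> l1 D m" unfolding lvals by (rule E(4))
  show "l1 D m \<le> aa D m + cc D m" unfolding lvals by (rule E(5))
  show "l1 D m * l2 D m = aa D m * cc D m - (bb D m)^2" unfolding lvals by (rule E(3))
  show "l1 D m + l2 D m = aa D m + cc D m" unfolding lvals by (simp add: field_simps)
qed

lemma l1_pos: "l1 D m > 0" by (rule half_pos[OF tr_pos[OF vD] lfacts(2)])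

definition c0 where "c0 = cw (top D) * nrm (ut D)"

lemma KML: "KK D = LL D + MM D" by (simp add: LL_def)

lemma l1_lo: "(c0/2) * exp (m * MM D) \<le> l1 D m"
proof -
  have "(c0/2) * exp (m * MM D) = (c0 * exp (m * MM D))/2" by simp
  thus ?thesis using half_le[OF tr_lower[OF vD, of m] lfacts(2)[of m]] unfolding c0_def by simp
qed

lemma l1_hi: "m \<ge> 0 \<Longrightarrow> l1 D m \<le> tc D * exp (m * MM D)"
  using tr_upper[OF vD, of m] lfacts(3)[of m] by (rule order_trans[rotated])

lemma expK: "exp (m * KK D) = exp (m * LL D) * exp (m * MM D)"
  by (simp add: KML distrib_left exp_add)

lemma l2_lo: assumes m: "m \<ge> 0" shows "(d0 D / tc D) * exp (m * LL D) \<le> l2 D m"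
proof -
  have tc: "tc D > 0" using tc_pos[OF vD] .
  have nn: "(d0 D / tc D) * exp (m * LL D) \<ge> 0" using d0_pos[OF vD] tc by simp
  have "(d0 D / tc D) * exp (m * LL D) * l1 D m \<le> (d0 D / tc D) * exp (m * LL D) * (tc D * exp (m * MM D))"
    by (rule mult_left_mono[OF l1_hi[OF m] nn])
  also have "\<dots> = d0 D * exp (m * KK D)" unfolding expK using tc by simp
  also have "\<dots> \<le> l2 D m * l1 D m" using det_lower[OF vD, of m] lfacts(4)[of m] by (simp add: mult.commute)
  finally show ?thesis using l1_pos[of m] by (rule mult_right_le_imp_le)
qed

lemma l2_hi: assumes m: "m \<ge> 0" shows "l2 D m \<le> (2 * dc D / c0) * exp (m * LL D)"
proof -
  have c0: "c0 > 0" using c0_pos[OF vD] by (simp add: c0_def)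
  have "l2 D m * ((c0/2) * exp (m * MM D)) \<le> l2 D m * l1 D m"
    using l1_lo[of m] lfacts(1)[of m] by (intro mult_left_mono) auto
  also have "\<dots> \<le> dc D * exp (m * KK D)" using det_upper[OF vD m] lfacts(4)[of m] by (simp add: mult.commute)
  also have "\<dots> = ((2 * dc D / c0) * exp (m * LL D)) * ((c0/2) * exp (m * MM D))"
    unfolding expK using c0 by simp
  finally have "l2 D m * ((c0/2) * exp (m * MM D)) \<le> ((2 * dc D / c0) * exp (m * LL D)) * ((c0/2) * exp (m * MM D))" .
  moreover have "(c0/2) * exp (m * MM D) > 0" using c0 by simp
  ultimately show ?thesis by (rule mult_right_le_imp_le)
qed

lemma lim_l1: "((\<lambda>m. ln (l1 D m) / m) \<longlongrightarrow> MM D) at_top"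
proof (rule growth_lim)
  show "c0/2 > 0" using c0_pos[OF vD] by (simp add: c0_def)
  show "tc D > 0" using tc_pos[OF vD] .
  show "eventually (\<lambda>m. c0 / 2 * exp (m * MM D) \<le> l1 D m \<and> l1 D m \<le> tc D * exp (m * MM D)) at_top"
    using eventually_ge_at_top[of 0] by (rule eventually_mono) (blast intro: l1_lo l1_hi)
qed

lemma lim_l2: "((\<lambda>m. ln (l2 D m) / m) \<longlongrightarrow> LL D) at_top"
proof (rule growth_lim)
  show "d0 D / tc D > 0" using d0_pos[OF vD] tc_pos[OF vD] by simp
  show "2 * dc D / c0 > 0" using c0_pos[OF vD] dc_pos[OF vD] by (simp add: c0_def)
  show "eventually (\<lambda>m. d0 D / tc D * exp (m * LL D) \<le> l2 D m \<and> l2 D m \<le> 2 * dc D / c0 * exp (m * LL D)) at_top"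
    using eventually_ge_at_top[of 0] by (rule eventually_mono) (blast intro: l2_lo l2_hi)
qed

end



definition q1 where "q1 D m = (if l1 D m = l2 D m then 0 else (aa D m - l2 D m)/(l1 D m - l2 D m))"
definition q2 where "q2 D m = (if l1 D m = l2 D m then 0 else bb D m/(l1 D m - l2 D m))"
definition q3 where "q3 D m = (if l1 D m = l2 D m then 0 else (cc D m - l2 D m)/(l1 D m - l2 D m))"

lemma q_bounds_real:
  fixes a b c :: real
  defines "s \<equiv> sqrt ((a - c)^2 + 4 * b^2)"
  shows "\<bar>(a - (a+c-s)/2) / s\<bar> \<le> 1" "\<bar>b / s\<bar> \<le> 1" "\<bar>(c - (a+c-s)/2) / s\<bar> \<le> 1"
proof -
  have s0: "s \<ge> 0" by (simp add: s_def)
  have "sqrt ((a-c)^2) \<le> s" unfolding s_def by (rule real_sqrt_le_mono) simp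
  hence ac: "\<bar>a - c\<bar> \<le> s" by simp
  have "sqrt ((2*b)^2) \<le> s" unfolding s_def by (rule real_sqrt_le_mono) (simp add: power_mult_distrib)
  hence "\<bar>2*b\<bar> \<le> s" by (simp only: real_sqrt_abs)
  hence bs: "2 * \<bar>b\<bar> \<le> s" by (simp add: abs_mult)
  have e1: "a - (a+c-s)/2 = (a - c + s)/2" "c - (a+c-s)/2 = (c - a + s)/2" by (simp_all add: field_simps)
  show "\<bar>(a - (a+c-s)/2) / s\<bar> \<le> 1" unfolding e1 using ac s0
    by (cases "s = 0") (auto simp: abs_le_iff divide_le_eq le_divide_eq)
  show "\<bar>(c - (a+c-s)/2) / s\<bar> \<le> 1" unfolding e1 using ac s0
    by (cases "s = 0") (auto simp: abs_le_iff divide_le_eq le_divide_eq)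
  show "\<bar>b / s\<bar> \<le> 1" using bs s0
    by (cases "s = 0") (auto simp: abs_le_iff divide_le_eq le_divide_eq)
qed

context fixes D assumes vD: "valid D"
begin

lemma l_diff: "l1 D m - l2 D m = sqrt ((aa D m - cc D m)^2 + 4 * (bb D m)^2)"
  unfolding lvals[OF vD] by (simp add: field_simps)

lemma q_bounds: "\<bar>q1 D m\<bar> \<le> 1" "\<bar>q2 D m\<bar> \<le> 1" "\<bar>q3 D m\<bar> \<le> 1"
proof -
  note B = q_bounds_real[where a="aa D m" and b="bb D m" and c="cc D m"]
  have eq: "(l1 D m = l2 D m) = (l1 D m - l2 D m = 0)" by simp
  show "\<bar>q1 D m\<bar> \<le> 1" unfolding q1_def eq l_diff unfolding lvals(2)[OF vD] using B(1) by simp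
  show "\<bar>q2 D m\<bar> \<le> 1" unfolding q2_def eq l_diff unfolding lvals(2)[OF vD] using B(2) by simp
  show "\<bar>q3 D m\<bar> \<le> 1" unfolding q3_def eq l_diff unfolding lvals(2)[OF vD] using B(3) by simp
qed

lemma rep: "(1/m) *\<^sub>R mlog (FF D m) = (ln (l2 D m)/m) *\<^sub>R mat 1 + ((ln (l1 D m) - ln (l2 D m))/m) *\<^sub>R sym2 (q1 D m) (q2 D m) (q3 D m)"
proof -
  have sym: "transpose (FF D m) = FF D m" by (simp add: FF_sym2 transpose_sym2)
  have ml: "mlog (FF D m) = glog (FF D m)"
    by (rule mlog_glog[OF sym]) (use lfacts(1)[OF vD, of m] in \<open>simp add: l2_def\<close>)
  show ?thesis
  proof (cases "l1 D m = l2 D m")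
    case True
    have "glog (FF D m) = ln (l1 D m) *\<^sub>R mat 1" unfolding glog_def using True by (simp add: l1_def l2_def)
    thus ?thesis unfolding ml using True by (simp add: q1_def q2_def q3_def sym2_zero[symmetric])
  next
    case False
    hence ne: "l1 D m - l2 D m \<noteq> 0" by simp
    have "glog (FF D m) = ln (l2 D m) *\<^sub>R mat 1 + ((ln (l1 D m) - ln (l2 D m)) / (l1 D m - l2 D m)) *\<^sub>R (FF D m - l2 D m *\<^sub>R mat 1)"
      unfolding glog_def using False by (simp add: l1_def l2_def)
    moreover have "FF D m - l2 D m *\<^sub>R mat 1 = (l1 D m - l2 D m) *\<^sub>R sym2 (q1 D m) (q2 D m) (q3 D m)"
      unfolding FF_sym2 mat1_sym2 sym2_scale sym2_diff q1_def q2_def q3_def using False ne by simp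
    ultimately show ?thesis unfolding ml using ne by (simp add: scaleR_add_right)
  qed
qed

end



lemma par_decomp:
  assumes u: "u \<noteq> 0" and c: "cr v u = 0"
  shows "v$1 = ((v$1*u$1 + v$2*u$2)/nrm u) * u$1" "v$2 = ((v$1*u$1 + v$2*u$2)/nrm u) * u$2"
proof -
  have n: "nrm u \<noteq> 0" using nrm_pos[OF u] by simp
  have c': "v$1 * u$2 = v$2 * u$1" using c by (simp add: cr_def)
  have "(v$1*u$1 + v$2*u$2) * u$1 - v$1 * nrm u = u$2 * (v$2 * u$1 - v$1 * u$2)"
    by (simp add: nrm_def algebra_simps power2_eq_square)
  hence "(v$1*u$1 + v$2*u$2) * u$1 = v$1 * nrm u" using c' by simp
  thus "v$1 = ((v$1*u$1 + v$2*u$2)/nrm u) * u$1" using n by (simp add: field_simps)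
  have "(v$1*u$1 + v$2*u$2) * u$2 - v$2 * nrm u = u$1 * (v$1 * u$2 - v$2 * u$1)"
    by (simp add: nrm_def algebra_simps power2_eq_square)
  hence "(v$1*u$1 + v$2*u$2) * u$2 = v$2 * nrm u" using c' by simp
  thus "v$2 = ((v$1*u$1 + v$2*u$2)/nrm u) * u$2" using n by (simp add: field_simps)
qed

context fixes D assumes vD: "valid D"
begin

lemma scaled_sum:
  "((\<lambda>m. (\<Sum>i<length D. f i * exp (m * ee (D!i))) * exp (-(m * MM D))) \<longlongrightarrow>
     (\<Sum>i<length D. if ee (D!i) = MM D then f i else 0)) at_top"
proof -
  have eq: "(\<Sum>i<length D. f i * exp (m * ee (D!i))) * exp (-(m * MM D)) = (\<Sum>i<length D. f i * exp (m * (ee (D!i) - MM D)))" for m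
    unfolding sum_distrib_right by (intro sum.cong refl) (simp add: exp_diff right_diff_distrib exp_minus field_simps)
  show ?thesis unfolding eq
  proof (rule tendsto_sum)
    fix i assume i: "i \<in> {..<length D}"
    show "((\<lambda>m. f i * exp (m * (ee (D!i) - MM D))) \<longlongrightarrow> (if ee (D!i) = MM D then f i else 0)) at_top"
    proof (cases "ee (D!i) = MM D")
      case True thus ?thesis by simp
    next
      case False
      hence "ee (D!i) - MM D < 0" using M_ge[OF vD, of "D!i"] i by auto
      from tendsto_mult[OF tendsto_const[of "f i"] exp_neg_lim[OF this]] False show ?thesis by simp
    qed
  qed
qed

lemma aa_alt: "aa D m = (\<Sum>i<length D. (cw (D!i) * (X D i)^2) * exp (m * ee (D!i)))"
  unfolding aa_def wt_def by (simp add: mult_ac)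
lemma bb_alt: "bb D m = (\<Sum>i<length D. (cw (D!i) * (X D i * Y D i)) * exp (m * ee (D!i)))"
  unfolding bb_def wt_def by (simp add: mult_ac)
lemma cc_alt: "cc D m = (\<Sum>i<length D. (cw (D!i) * (Y D i)^2) * exp (m * ee (D!i)))"
  unfolding cc_def wt_def by (simp add: mult_ac)

definition Ai where "Ai = (\<Sum>i<length D. if ee (D!i) = MM D then cw (D!i) * (X D i)^2 else 0)"
definition Bi where "Bi = (\<Sum>i<length D. if ee (D!i) = MM D then cw (D!i) * (X D i * Y D i) else 0)"
definition Ci where "Ci = (\<Sum>i<length D. if ee (D!i) = MM D then cw (D!i) * (Y D i)^2 else 0)"

lemma lim_sa: "((\<lambda>m. aa D m * exp (-(m * MM D))) \<longlongrightarrow> Ai) at_top"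
  unfolding aa_alt Ai_def by (rule scaled_sum)
lemma lim_sb: "((\<lambda>m. bb D m * exp (-(m * MM D))) \<longlongrightarrow> Bi) at_top"
  unfolding bb_alt Bi_def by (rule scaled_sum)
lemma lim_sc: "((\<lambda>m. cc D m * exp (-(m * MM D))) \<longlongrightarrow> Ci) at_top"
  unfolding cc_alt Ci_def by (rule scaled_sum)

lemma lim_sl2: assumes LM: "LL D < MM D" shows "((\<lambda>m. l2 D m * exp (-(m * MM D))) \<longlongrightarrow> 0) at_top"
proof (rule tendsto_sandwich[of "\<lambda>_. 0" _ _ "\<lambda>m. (2 * dc D / c0 D) * exp (m * (LL D - MM D))"])
  show "eventually (\<lambda>m. 0 \<le> l2 D m * exp (-(m * MM D))) at_top"
    using lfacts(1)[OF vD] by (simp add: less_imp_le)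
  show "eventually (\<lambda>m. l2 D m * exp (-(m * MM D)) \<le> (2 * dc D / c0 D) * exp (m * (LL D - MM D))) at_top"
    using eventually_ge_at_top[of 0]
  proof (rule eventually_mono)
    fix m :: real assume m: "m \<ge> 0"
    have "l2 D m * exp (-(m * MM D)) \<le> ((2 * dc D / c0 D) * exp (m * LL D)) * exp (-(m * MM D))"
      by (rule mult_right_mono[OF l2_hi[OF vD m]]) simp
    also have "\<dots> = (2 * dc D / c0 D) * exp (m * (LL D - MM D))"
      by (simp add: right_diff_distrib exp_diff exp_minus field_simps)
    finally show "l2 D m * exp (-(m * MM D)) \<le> (2 * dc D / c0 D) * exp (m * (LL D - MM D))" .
  qed
  show "((\<lambda>_. 0::real) \<longlongrightarrow> 0) at_top" by simp
  show "((\<lambda>m. (2 * dc D / c0 D) * exp (m * (LL D - MM D))) \<longlongrightarrow> 0) at_top"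
  proof -
    have "((\<lambda>m. (2 * dc D / c0 D) * exp (m * (LL D - MM D))) \<longlongrightarrow> (2 * dc D / c0 D) * 0) at_top"
      by (rule tendsto_mult[OF tendsto_const exp_neg_lim]) (use LM in simp)
    thus ?thesis by simp
  qed
qed


definition mu where "mu i = (X D i * ut D $ 1 + Y D i * ut D $ 2) / nrm (ut D)"
definition kap where "kap = (\<Sum>i<length D. if ee (D!i) = MM D then cw (D!i) * (mu i)^2 else 0)"

lemma top_par: assumes LM: "LL D < MM D" and i: "i < length D" and t: "ee (D!i) = MM D"
  shows "X D i = mu i * ut D $ 1" "Y D i = mu i * ut D $ 2"
proof -
  have "cr (vv (D!i)) (ut D) = 0" using F5[OF vD LM _ t] i by simp
  from par_decomp[OF ut_nz[OF vD] this]
  show "X D i = mu i * ut D $ 1" "Y D i = mu i * ut D $ 2" by (simp_all add: mu_def X_def Y_def)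
qed

lemma ABC_kap: assumes LM: "LL D < MM D"
  shows "Ai = kap * (ut D $ 1)^2" "Bi = kap * (ut D $ 1 * ut D $ 2)" "Ci = kap * (ut D $ 2)^2"
proof -
  show "Ai = kap * (ut D $ 1)^2" unfolding Ai_def kap_def sum_distrib_right
    by (intro sum.cong refl) (auto simp: top_par[OF LM] power_mult_distrib)
  show "Bi = kap * (ut D $ 1 * ut D $ 2)" unfolding Bi_def kap_def sum_distrib_right
    by (intro sum.cong refl) (auto simp: top_par[OF LM] power2_eq_square mult_ac)
  show "Ci = kap * (ut D $ 2)^2" unfolding Ci_def kap_def sum_distrib_right
    by (intro sum.cong refl) (auto simp: top_par[OF LM] power_mult_distrib)
qed

lemma kap_pos: "kap > 0"
proof -
  obtain k where k: "k < length D" "D!k = top D" using idx[OF vD top_in(1)[OF vD]] by blast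
  have u: "nrm (ut D) > 0" using nrm_pos[OF ut_nz[OF vD]] .
  have "mu k = nrm (ut D) / nrm (ut D)" unfolding mu_def X_def Y_def using k by (simp add: ut_def nrm_def power2_eq_square)
  hence "mu k = 1" using u by simp
  have nn: "0 \<le> (if ee (D!i) = MM D then cw (D!i) * (mu i)^2 else 0)" if "i < length D" for i
    using cw_pos[OF vD that] by simp
  have "(if ee (D!k) = MM D then cw (D!k) * (mu k)^2 else 0) \<le> kap" unfolding kap_def
    by (rule member_le_sum) (use k nn in auto)
  hence "cw (D!k) \<le> kap" using k top_in(2)[OF vD] \<open>mu k = 1\<close> by simp
  thus ?thesis using cw_pos[OF vD k(1)] by simp
qed

end



context fixes D assumes vD: "valid D"
begin

lemma q_lims: assumes LM: "LL D < MM D"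
  shows "(q1 D \<longlongrightarrow> (ut D $ 1)^2 / nrm (ut D)) at_top"
        "(q2 D \<longlongrightarrow> (ut D $ 1 * ut D $ 2) / nrm (ut D)) at_top"
        "(q3 D \<longlongrightarrow> (ut D $ 2)^2 / nrm (ut D)) at_top"
proof -
  define E where "E m = exp (-(m * MM D))" for m
  have Epos: "E m > 0" for m by (simp add: E_def)
  have l1eq: "l1 D m = aa D m + cc D m - l2 D m" for m using lfacts(5)[OF vD, of m] by simp
  have sa: "((\<lambda>m. aa D m * E m) \<longlongrightarrow> Ai D) at_top" unfolding E_def by (rule lim_sa[OF vD])
  have sb: "((\<lambda>m. bb D m * E m) \<longlongrightarrow> Bi D) at_top" unfolding E_def by (rule lim_sb[OF vD])
  have sc: "((\<lambda>m. cc D m * E m) \<longlongrightarrow> Ci D) at_top" unfolding E_def by (rule lim_sc[OF vD])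
  have s2: "((\<lambda>m. l2 D m * E m) \<longlongrightarrow> 0) at_top" unfolding E_def by (rule lim_sl2[OF vD LM])
  have deq: "(l1 D m - l2 D m) * E m = aa D m * E m + cc D m * E m - 2 * (l2 D m * E m)" for m
    unfolding l1eq by (simp add: algebra_simps)
  have den: "((\<lambda>m. (l1 D m - l2 D m) * E m) \<longlongrightarrow> Ai D + Ci D) at_top"
    unfolding deq using tendsto_diff[OF tendsto_add[OF sa sc] tendsto_mult[OF tendsto_const[of 2] s2]] by simp
  have u: "nrm (ut D) > 0" using nrm_pos[OF ut_nz[OF vD]] .
  have AC: "Ai D + Ci D = kap D * nrm (ut D)" unfolding ABC_kap[OF vD LM] by (simp add: nrm_def algebra_simps)
  have ACpos: "Ai D + Ci D > 0" unfolding AC using kap_pos[OF vD] u by simp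
  have ev: "eventually (\<lambda>m. (l1 D m - l2 D m) * E m > 0) at_top"
    by (rule order_tendstoD(1)[OF den ACpos])
  have ne: "eventually (\<lambda>m. l1 D m \<noteq> l2 D m) at_top"
    by (rule eventually_mono[OF ev]) auto
  have frac: "(x * E m) / ((l1 D m - l2 D m) * E m) = x / (l1 D m - l2 D m)" for x m
    using Epos[of m] by (intro nonzero_mult_divide_mult_cancel_right) simp
  have L1: "((\<lambda>m. (aa D m * E m - l2 D m * E m) / ((l1 D m - l2 D m) * E m)) \<longlongrightarrow> (Ai D - 0) / (Ai D + Ci D)) at_top"
    by (rule tendsto_divide[OF tendsto_diff[OF sa s2] den]) (use ACpos in simp)
  have E1: "eventually (\<lambda>m. (aa D m * E m - l2 D m * E m) / ((l1 D m - l2 D m) * E m) = q1 D m) at_top"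
    by (rule eventually_mono[OF ne]) (simp only: left_diff_distrib[symmetric] q1_def frac if_False)
  have V1: "(Ai D - 0) / (Ai D + Ci D) = (ut D $ 1)^2 / nrm (ut D)"
    unfolding AC using ABC_kap(1)[OF vD LM] kap_pos[OF vD] by simp
  show "(q1 D \<longlongrightarrow> (ut D $ 1)^2 / nrm (ut D)) at_top"
    using tendsto_cong[OF E1, THEN iffD1, OF L1] unfolding V1 .
  have L2: "((\<lambda>m. (bb D m * E m) / ((l1 D m - l2 D m) * E m)) \<longlongrightarrow> Bi D / (Ai D + Ci D)) at_top"
    by (rule tendsto_divide[OF sb den]) (use ACpos in simp)
  have E2: "eventually (\<lambda>m. (bb D m * E m) / ((l1 D m - l2 D m) * E m) = q2 D m) at_top"
    by (rule eventually_mono[OF ne]) (simp only: q2_def frac if_False)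
  have V2: "Bi D / (Ai D + Ci D) = (ut D $ 1 * ut D $ 2) / nrm (ut D)"
    unfolding AC using ABC_kap(2)[OF vD LM] kap_pos[OF vD] by simp
  show "(q2 D \<longlongrightarrow> (ut D $ 1 * ut D $ 2) / nrm (ut D)) at_top"
    using tendsto_cong[OF E2, THEN iffD1, OF L2] unfolding V2 .
  have L3: "((\<lambda>m. (cc D m * E m - l2 D m * E m) / ((l1 D m - l2 D m) * E m)) \<longlongrightarrow> (Ci D - 0) / (Ai D + Ci D)) at_top"
    by (rule tendsto_divide[OF tendsto_diff[OF sc s2] den]) (use ACpos in simp)
  have E3: "eventually (\<lambda>m. (cc D m * E m - l2 D m * E m) / ((l1 D m - l2 D m) * E m) = q3 D m) at_top"
    by (rule eventually_mono[OF ne]) (simp only: left_diff_distrib[symmetric] q3_def frac if_False)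
  have V3: "(Ci D - 0) / (Ai D + Ci D) = (ut D $ 2)^2 / nrm (ut D)"
    unfolding AC using ABC_kap(3)[OF vD LM] kap_pos[OF vD] by simp
  show "(q3 D \<longlongrightarrow> (ut D $ 2)^2 / nrm (ut D)) at_top"
    using tendsto_cong[OF E3, THEN iffD1, OF L3] unfolding V3 .
qed


lemma SS_sym2: "SS D = sym2 (LL D + (MM D - LL D) * ((ut D $ 1)^2 / nrm (ut D)))
    ((MM D - LL D) * ((ut D $ 1 * ut D $ 2) / nrm (ut D))) (LL D + (MM D - LL D) * ((ut D $ 2)^2 / nrm (ut D)))"
  unfolding SS_def decomp_alt[OF ut_nz[OF vD]] unfolding proj_sym2 mat1_sym2 sym2_scale sym2_add by simp

theorem limA: "((\<lambda>m. (1/m) *\<^sub>R mlog (FF D m)) \<longlongrightarrow> SS D) at_top"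
proof -
  define \<phi> where "\<phi> m = ln (l2 D m) / m" for m
  define \<psi> where "\<psi> m = (ln (l1 D m) - ln (l2 D m)) / m" for m
  have f: "(1/m) *\<^sub>R mlog (FF D m) = sym2 (\<phi> m + \<psi> m * q1 D m) (\<psi> m * q2 D m) (\<phi> m + \<psi> m * q3 D m)" for m
    unfolding rep[OF vD] mat1_sym2 sym2_scale sym2_add \<phi>_def \<psi>_def by simp
  have phi: "(\<phi> \<longlongrightarrow> LL D) at_top" unfolding \<phi>_def by (rule lim_l2[OF vD])
  have psi: "(\<psi> \<longlongrightarrow> MM D - LL D) at_top" unfolding \<psi>_def diff_divide_distrib
    by (rule tendsto_diff[OF lim_l1[OF vD] lim_l2[OF vD]])
  have LM: "MM D - LL D \<noteq> 0 \<Longrightarrow> LL D < MM D" using L_le_M[OF vD] by simp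
  have p1: "((\<lambda>m. \<psi> m * q1 D m) \<longlongrightarrow> (MM D - LL D) * ((ut D $ 1)^2 / nrm (ut D))) at_top"
    by (rule bounded_mult_lim[OF psi]) (simp_all add: q_bounds[OF vD] q_lims(1)[OF LM])
  have p2: "((\<lambda>m. \<psi> m * q2 D m) \<longlongrightarrow> (MM D - LL D) * ((ut D $ 1 * ut D $ 2) / nrm (ut D))) at_top"
    by (rule bounded_mult_lim[OF psi]) (simp_all add: q_bounds[OF vD] q_lims(2)[OF LM])
  have p3: "((\<lambda>m. \<psi> m * q3 D m) \<longlongrightarrow> (MM D - LL D) * ((ut D $ 2)^2 / nrm (ut D))) at_top"
    by (rule bounded_mult_lim[OF psi]) (simp_all add: q_bounds[OF vD] q_lims(3)[OF LM])
  show ?thesis unfolding f SS_sym2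
    by (rule tendsto_sym2[OF tendsto_add[OF phi p1] p2 tendsto_add[OF phi p3]])
qed

end



definition EE :: "dat list \<Rightarrow> dat list" where
  "EE D = [Dat (MM D) (1 / nrm (ut D)) (ut D), Dat (LL D) (1 / nrm (ut D)) (perp (ut D))]"

lemma cr_perp_nz: assumes "u \<noteq> 0" "w \<noteq> 0" "cr w u = 0" shows "cr w (perp u) \<noteq> 0"
proof
  assume h: "cr w (perp u) = 0"
  have n: "nrm u > 0" using nrm_pos[OF assms(1)] .
  have a: "w$1 * u$2 - w$2 * u$1 = 0" using assms(3) by (simp add: cr_def)
  have b: "w$1 * u$1 + w$2 * u$2 = 0" using h by (simp add: cr_def)
  have "w$1 * nrm u = u$1 * (w$1 * u$1 + w$2 * u$2) + u$2 * (w$1 * u$2 - w$2 * u$1)"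
    by (simp add: nrm_def power2_eq_square algebra_simps)
  hence 1: "w$1 * nrm u = 0" unfolding a b by simp
  have "w$2 * nrm u = u$2 * (w$1 * u$1 + w$2 * u$2) - u$1 * (w$1 * u$2 - w$2 * u$1)"
    by (simp add: nrm_def power2_eq_square algebra_simps)
  hence 2: "w$2 * nrm u = 0" unfolding a b by simp
  have "w = 0" using 1 2 n by (simp add: vec_eq2)
  thus False using assms(2) by simp
qed

lemma par_trans: assumes "cr a b = 0" "cr b c = 0" "b \<noteq> 0" shows "cr a c = 0"
proof -
  have "b$1 * cr a c = c$1 * cr a b + a$1 * cr b c" by (simp add: cr_def algebra_simps)
  hence e1: "b$1 * cr a c = 0" using assms by simp
  have "b$2 * cr a c = c$2 * cr a b + a$2 * cr b c" by (simp add: cr_def algebra_simps)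
  hence e2: "b$2 * cr a c = 0" using assms by simp
  show ?thesis using e1 e2 assms(3) by (auto simp: vec_eq2)
qed

lemma proj_scale: assumes "w \<noteq> 0" "\<mu> \<noteq> 0" shows "proj (\<mu> *\<^sub>R w) = proj w"
proof -
  have n: "nrm w > 0" using nrm_pos[OF assms(1)] .
  have N: "nrm (\<mu> *\<^sub>R w) = \<mu>^2 * nrm w" by (simp add: nrm_def power_mult_distrib algebra_simps)
  show ?thesis unfolding proj_sym2 N using n assms(2) by (simp add: power_mult_distrib mat_eq2 field_simps power2_eq_square)
qed

lemma proj_par: assumes "u \<noteq> 0" "w \<noteq> 0" "cr u w = 0" shows "proj u = proj w"
proof -
  define \<mu> where "\<mu> = (u$1*w$1 + u$2*w$2)/nrm w"
  have "u = \<mu> *\<^sub>R w" using par_decomp[OF assms(2,3)] by (simp add: vec_eq2 \<mu>_def)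
  moreover hence "\<mu> \<noteq> 0" using assms(1) by auto
  ultimately show ?thesis using proj_scale[OF assms(2)] by simp
qed



lemma SS_eq: assumes v: "valid D" "valid D'" and M: "MM D = MM D'" and K: "KK D = KK D'"
  and P: "LL D < MM D \<Longrightarrow> cr (ut D) (ut D') = 0"
  shows "SS D = SS D'"
proof -
  have L: "LL D = LL D'" using M K by (simp add: LL_def)
  have s: "SS D = LL D *\<^sub>R mat 1 + (MM D - LL D) *\<^sub>R proj (ut D)" "SS D' = LL D' *\<^sub>R mat 1 + (MM D' - LL D') *\<^sub>R proj (ut D')"
    unfolding SS_def by (simp_all add: decomp_alt ut_nz v)
  show ?thesis
  proof (cases "LL D < MM D")
    case True
    hence "proj (ut D) = proj (ut D')" using proj_par[OF ut_nz[OF v(1)] ut_nz[OF v(2)] P] by simp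
    thus ?thesis unfolding s L M by simp
  next
    case False
    hence "MM D - LL D = 0" using L_le_M[OF v(1)] by simp
    thus ?thesis unfolding s L M by simp
  qed
qed

lemma valid_EE: assumes "valid D" shows "valid (EE D)"
proof -
  have u: "ut D \<noteq> 0" using ut_nz[OF assms] .
  have n: "nrm (ut D) > 0" using nrm_pos[OF u] .
  have "cr (ut D) (perp (ut D)) \<noteq> 0" unfolding cr_perp using n by simp
  thus ?thesis unfolding valid_def EE_def using u n perp_nz[OF u] by auto
qed

lemma valid_app: "valid D1 \<Longrightarrow> valid D2 \<Longrightarrow> valid (D1 @ D2)"
  unfolding valid_def by auto

lemma MM_char: "valid D \<Longrightarrow> d \<in> set D \<Longrightarrow> (\<forall>d'\<in>set D. ee d' \<le> ee d) \<Longrightarrow> MM D = ee d"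
  unfolding MM_def by (intro Max_eqI) auto

lemma KK_le: assumes "valid D" and H: "\<And>d1 d2. d1 \<in> set D \<Longrightarrow> d2 \<in> set D \<Longrightarrow> cr (vv d1) (vv d2) \<noteq> 0 \<Longrightarrow> ee d1 + ee d2 \<le> k"
  shows "KK D \<le> k"
  using K_in[OF assms(1)] H by force

lemma Qlem: assumes v: "valid D" and w: "w \<noteq> 0"
  shows "\<exists>y\<in>set D. cr w (vv y) \<noteq> 0 \<and> LL D \<le> ee y"
proof -
  obtain y1 y2 where y: "y1 \<in> set D" "y2 \<in> set D" "cr (vv y1) (vv y2) \<noteq> 0" "ee y1 \<ge> LL D" "ee y2 \<ge> LL D"
    using F6[OF v] by blast
  show ?thesis
  proof (cases "cr w (vv y1) = 0")
    case False thus ?thesis using y by blast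
  next
    case True
    have "cr w (vv y2) \<noteq> 0"
    proof
      assume "cr w (vv y2) = 0"
      hence "cr (vv y1) (vv y2) = 0" using par_trans[of "vv y1" w "vv y2"] True w cr_swap[of w "vv y1"] by simp
      thus False using y by simp
    qed
    thus ?thesis using y by blast
  qed
qed

lemma Qlem_EE: assumes v: "valid D" and w: "w \<noteq> 0"
  shows "\<exists>z\<in>set (EE D). cr w (vv z) \<noteq> 0 \<and> LL D \<le> ee z"
proof (cases "cr w (ut D) = 0")
  case True
  hence "cr w (perp (ut D)) \<noteq> 0" using cr_perp_nz[OF ut_nz[OF v] w] by simp
  thus ?thesis unfolding EE_def by auto
next
  case False thus ?thesis unfolding EE_def using L_le_M[OF v] by auto
qed


lemma a_in_EE: "Dat (MM D) (1 / nrm (ut D)) (ut D) \<in> set (EE D)" by (simp add: EE_def)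

lemma cross:
  assumes v1: "valid D1" and v2: "valid D2" and d: "d \<in> set D1" and d': "d' \<in> set D2"
    and c: "cr (vv d) (vv d') \<noteq> 0"
  shows "\<exists>z1\<in>set (EE D1). \<exists>z2\<in>set (EE D2). cr (vv z1) (vv z2) \<noteq> 0 \<and> ee d + ee d' \<le> ee z1 + ee z2"
proof -
  let ?a1 = "Dat (MM D1) (1 / nrm (ut D1)) (ut D1)" and ?a2 = "Dat (MM D2) (1 / nrm (ut D2)) (ut D2)"
  have u1: "ut D1 \<noteq> 0" and u2: "ut D2 \<noteq> 0" using ut_nz v1 v2 by auto
  have Md: "ee d \<le> MM D1" and Md': "ee d' \<le> MM D2" using M_ge v1 v2 d d' by auto
  show ?thesis
  proof (cases "cr (vv d) (ut D1) = 0")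
    case A: True
    show ?thesis
    proof (cases "cr (vv d') (ut D2) = 0")
      case B: True
      have "cr (ut D1) (ut D2) \<noteq> 0"
      proof
        assume h: "cr (ut D1) (ut D2) = 0"
        have "cr (vv d) (ut D2) = 0" by (rule par_trans[OF A h u1])
        moreover have "cr (ut D2) (vv d') = 0" using B cr_swap[of "ut D2" "vv d'"] by simp
        ultimately have "cr (vv d) (vv d') = 0" using par_trans u2 by blast
        thus False using c by simp
      qed
      thus ?thesis using Md Md' a_in_EE[of D1] a_in_EE[of D2] by (intro bexI[of _ ?a1] bexI[of _ ?a2]) auto
    next
      case B: False
      have "ee d' \<le> LL D2" by (rule F4[OF v2 d' B])
      moreover obtain z2 where z2: "z2 \<in> set (EE D2)" "cr (ut D1) (vv z2) \<noteq> 0" "LL D2 \<le> ee z2"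
        using Qlem_EE[OF v2 u1] by blast
      ultimately show ?thesis using Md a_in_EE[of D1] by (intro bexI[of _ ?a1] bexI[of _ z2]) auto
    qed
  next
    case A: False
    have Ld: "ee d \<le> LL D1" by (rule F4[OF v1 d A])
    show ?thesis
    proof (cases "cr (vv d') (ut D2) = 0")
      case B: True
      obtain z1 where z1: "z1 \<in> set (EE D1)" "cr (ut D2) (vv z1) \<noteq> 0" "LL D1 \<le> ee z1"
        using Qlem_EE[OF v1 u2] by blast
      have "cr (vv z1) (ut D2) \<noteq> 0" using z1(2) cr_swap[of "vv z1" "ut D2"] by simp
      thus ?thesis using Md' Ld z1 a_in_EE[of D2] by (intro bexI[of _ z1] bexI[of _ ?a2]) auto
    next
      case B: False
      have "ee d' \<le> LL D2" by (rule F4[OF v2 d' B])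
      moreover obtain z2 where z2: "z2 \<in> set (EE D2)" "cr (ut D1) (vv z2) \<noteq> 0" "LL D2 \<le> ee z2"
        using Qlem_EE[OF v2 u1] by blast
      moreover have "LL D1 \<le> MM D1" by (rule L_le_M[OF v1])
      ultimately show ?thesis using Ld a_in_EE[of D1] by (intro bexI[of _ ?a1] bexI[of _ z2]) auto
    qed
  qed
qed


lemma set_EE: "z \<in> set (EE D) \<longleftrightarrow> z = Dat (MM D) (1 / nrm (ut D)) (ut D) \<or> z = Dat (LL D) (1 / nrm (ut D)) (perp (ut D))"
  by (auto simp: EE_def)

lemma K_sub: assumes "valid D1" "valid D" "set D1 \<subseteq> set D" shows "KK D1 \<le> KK D"
  using K_in[OF assms(1)] K_ge[OF assms(2)] assms(3) by force

lemma top_vv: "valid D \<Longrightarrow> vv (top D) = ut D" by (simp add: ut_def)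

lemma crossE:
  assumes v1: "valid D1" and v2: "valid D2" and z1: "z1 \<in> set (EE D1)" and z2: "z2 \<in> set (EE D2)"
    and c: "cr (vv z1) (vv z2) \<noteq> 0"
  shows "ee z1 + ee z2 \<le> KK (D1 @ D2)"
proof -
  let ?D = "D1 @ D2"
  have v: "valid ?D" by (rule valid_app[OF v1 v2])
  have u1: "ut D1 \<noteq> 0" and u2: "ut D2 \<noteq> 0" using ut_nz v1 v2 by auto
  have t1: "top D1 \<in> set ?D" "ee (top D1) = MM D1" using top_in[OF v1] by auto
  have t2: "top D2 \<in> set ?D" "ee (top D2) = MM D2" using top_in[OF v2] by auto
  have LM1: "LL D1 \<le> MM D1" and LM2: "LL D2 \<le> MM D2" using L_le_M v1 v2 by auto
  have htop: "cr (ut D1) (ut D2) \<noteq> 0 \<Longrightarrow> MM D1 + MM D2 \<le> KK ?D"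
    using K_ge[OF v t1(1) t2(1)] t1 t2 by (simp add: ut_def)
  have h12: "MM D1 + LL D2 \<le> KK ?D"
  proof -
    obtain y where y: "y \<in> set D2" "cr (ut D1) (vv y) \<noteq> 0" "LL D2 \<le> ee y" using Qlem[OF v2 u1] by blast
    have "ee (top D1) + ee y \<le> KK ?D" using K_ge[OF v t1(1), of y] y by (simp add: ut_def)
    thus ?thesis using t1 y by simp
  qed
  have h21: "LL D1 + MM D2 \<le> KK ?D"
  proof -
    obtain y where y: "y \<in> set D1" "cr (ut D2) (vv y) \<noteq> 0" "LL D1 \<le> ee y" using Qlem[OF v1 u2] by blast
    have "cr (vv y) (ut D2) \<noteq> 0" using y(2) cr_swap[of "vv y" "ut D2"] by simp
    hence "ee y + ee (top D2) \<le> KK ?D" using K_ge[OF v _ t2(1), of y] y by (simp add: ut_def)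
    thus ?thesis using t2 y by simp
  qed
  show ?thesis using z1 z2 c htop h12 h21 LM1 LM2 unfolding set_EE by auto
qed

lemma sameE:
  assumes v1: "valid D1" and v: "valid D" and sub: "set D1 \<subseteq> set D"
    and z1: "z1 \<in> set (EE D1)" and z2: "z2 \<in> set (EE D1)" and c: "cr (vv z1) (vv z2) \<noteq> 0"
  shows "ee z1 + ee z2 \<le> KK D"
proof -
  have "KK D1 \<le> KK D" by (rule K_sub[OF v1 v sub])
  hence "MM D1 + LL D1 \<le> KK D" by (simp add: LL_def)
  thus ?thesis using z1 z2 c unfolding set_EE by (auto simp: cr_self)
qed


lemma KK_set: "set D = set D' \<Longrightarrow> KK D = KK D'" by (simp add: KK_def pairs_def)

lemma K_in_E: assumes v1: "valid D1" and vE: "valid E" and sub: "set (EE D1) \<subseteq> set E"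
  shows "KK D1 \<le> KK E"
proof -
  have u: "ut D1 \<noteq> 0" using ut_nz[OF v1] .
  have c: "cr (ut D1) (perp (ut D1)) \<noteq> 0" unfolding cr_perp using nrm_pos[OF u] by simp
  have "MM D1 + LL D1 \<le> KK E"
    using K_ge[OF vE, of "Dat (MM D1) (1 / nrm (ut D1)) (ut D1)" "Dat (LL D1) (1 / nrm (ut D1)) (perp (ut D1))"]
      sub c by (auto simp: EE_def)
  thus ?thesis by (simp add: LL_def)
qed

theorem transB: assumes v1: "valid D1" and v2: "valid D2"
  shows "SS (D1 @ D2) = SS (EE D1 @ EE D2)"
proof -
  let ?D = "D1 @ D2" and ?E = "EE D1 @ EE D2"
  have vD: "valid ?D" by (rule valid_app[OF v1 v2])
  have vE: "valid ?E" by (rule valid_app[OF valid_EE[OF v1] valid_EE[OF v2]])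
  have LM1: "LL D1 \<le> MM D1" and LM2: "LL D2 \<le> MM D2" using L_le_M v1 v2 by auto
  have MD: "MM ?D = max (MM D1) (MM D2)"
  proof (cases "MM D2 \<le> MM D1")
    case True
    have "MM ?D = ee (top D1)"
      by (rule MM_char[OF vD]) (use top_in[OF v1] True M_ge[OF v1] M_ge[OF v2] in force)+
    thus ?thesis using True top_in[OF v1] by simp
  next
    case False
    have "MM ?D = ee (top D2)"
      by (rule MM_char[OF vD]) (use top_in[OF v2] False M_ge[OF v1] M_ge[OF v2] in force)+
    thus ?thesis using False top_in[OF v2] by simp
  qed
  have ME: "MM ?E = max (MM D1) (MM D2)"
  proof (cases "MM D2 \<le> MM D1")
    case True
    have "MM ?E = ee (Dat (MM D1) (1 / nrm (ut D1)) (ut D1))"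
      by (rule MM_char[OF vE]) (use True LM1 LM2 in \<open>auto simp: EE_def\<close>)
    thus ?thesis using True by simp
  next
    case False
    have "MM ?E = ee (Dat (MM D2) (1 / nrm (ut D2)) (ut D2))"
      by (rule MM_char[OF vE]) (use False LM1 LM2 in \<open>auto simp: EE_def\<close>)
    thus ?thesis using False by simp
  qed
  have K1: "KK D1 \<le> KK ?E" by (rule K_in_E[OF v1 vE]) auto
  have K2: "KK D2 \<le> KK ?E" by (rule K_in_E[OF v2 vE]) auto
  have KDE: "KK ?D \<le> KK ?E"
  proof (rule KK_le[OF vD])
    fix d1 d2 assume d: "d1 \<in> set ?D" "d2 \<in> set ?D" and c: "cr (vv d1) (vv d2) \<noteq> 0"
    show "ee d1 + ee d2 \<le> KK ?E"
    proof -
      { assume "d1 \<in> set D1" "d2 \<in> set D1"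
        hence ?thesis using K_ge[OF v1 _ _ c] K1 by fastforce }
      moreover
      { assume "d1 \<in> set D2" "d2 \<in> set D2"
        hence ?thesis using K_ge[OF v2 _ _ c] K2 by fastforce }
      moreover
      { assume a: "d1 \<in> set D1" "d2 \<in> set D2"
        then obtain z1 z2 where z: "z1 \<in> set (EE D1)" "z2 \<in> set (EE D2)" "cr (vv z1) (vv z2) \<noteq> 0" "ee d1 + ee d2 \<le> ee z1 + ee z2"
          using cross[OF v1 v2 a c] by blast
        have "ee z1 + ee z2 \<le> KK ?E" using K_ge[OF vE _ _ z(3)] z(1,2) by auto
        hence ?thesis using z(4) by simp }
      moreover
      { assume a: "d1 \<in> set D2" "d2 \<in> set D1"
        then obtain z1 z2 where z: "z1 \<in> set (EE D2)" "z2 \<in> set (EE D1)" "cr (vv z1) (vv z2) \<noteq> 0" "ee d1 + ee d2 \<le> ee z1 + ee z2"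
          using cross[OF v2 v1 a c] by blast
        have "ee z1 + ee z2 \<le> KK ?E" using K_ge[OF vE _ _ z(3)] z(1,2) by auto
        hence ?thesis using z(4) by simp }
      ultimately show ?thesis using d by auto
    qed
  qed
  have KED: "KK ?E \<le> KK ?D"
  proof (rule KK_le[OF vE])
    fix z1 z2 assume z: "z1 \<in> set ?E" "z2 \<in> set ?E" and c: "cr (vv z1) (vv z2) \<noteq> 0"
    have swap: "KK (D2 @ D1) = KK ?D" by (rule KK_set) auto
    show "ee z1 + ee z2 \<le> KK ?D"
    proof -
      { assume "z1 \<in> set (EE D1)" "z2 \<in> set (EE D1)"
        hence ?thesis using sameE[OF v1 vD _ _ _ c] by auto }
      moreover
      { assume "z1 \<in> set (EE D2)" "z2 \<in> set (EE D2)"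
        hence ?thesis using sameE[OF v2 vD _ _ _ c] by auto }
      moreover
      { assume "z1 \<in> set (EE D1)" "z2 \<in> set (EE D2)"
        hence ?thesis using crossE[OF v1 v2 _ _ c] by auto }
      moreover
      { assume "z1 \<in> set (EE D2)" "z2 \<in> set (EE D1)"
        hence ?thesis using crossE[OF v2 v1 _ _ c] swap by auto }
      ultimately show ?thesis using z by auto
    qed
  qed
  have K: "KK ?D = KK ?E" using KDE KED by simp
  have M: "MM ?D = MM ?E" using MD ME by simp
  show ?thesis
  proof (rule SS_eq[OF vD vE M K])
    assume LMD: "LL ?D < MM ?D"
    have LME: "LL ?E < MM ?E" using LMD K M by (simp add: LL_def)
    show "cr (ut ?D) (ut ?E) = 0"
    proof (cases "MM D2 \<le> MM D1")
      case True
      have a: "cr (ut D1) (ut ?D) = 0"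
        using F5[OF vD LMD, of "top D1"] top_in[OF v1] MD True by (simp add: ut_def)
      have b: "cr (ut D1) (ut ?E) = 0"
        using F5[OF vE LME, of "Dat (MM D1) (1 / nrm (ut D1)) (ut D1)"] ME True by (simp add: EE_def)
      have "cr (ut ?D) (ut D1) = 0" using a cr_swap[of "ut ?D" "ut D1"] by simp
      thus ?thesis using par_trans[OF _ b ut_nz[OF v1]] by simp
    next
      case False
      have a: "cr (ut D2) (ut ?D) = 0"
        using F5[OF vD LMD, of "top D2"] top_in[OF v2] MD False by (simp add: ut_def)
      have b: "cr (ut D2) (ut ?E) = 0"
        using F5[OF vE LME, of "Dat (MM D2) (1 / nrm (ut D2)) (ut D2)"] ME False by (simp add: EE_def)
      have "cr (ut ?D) (ut D2) = 0" using a cr_swap[of "ut ?D" "ut D2"] by simp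
      thus ?thesis using par_trans[OF _ b ut_nz[OF v2]] by simp
    qed
  qed
qed



lemma FF_nil: "FF [] m = 0" by (simp add: FF_def)

lemma mexp_data: assumes u: "u \<noteq> 0"
  shows "mexp (m *\<^sub>R (x *\<^sub>R proj u + y *\<^sub>R proj (perp u))) = FF [Dat x (1 / nrm u) u, Dat y (1 / nrm u) (perp u)] m"
proof -
  have "m *\<^sub>R (x *\<^sub>R proj u + y *\<^sub>R proj (perp u)) = (m * x) *\<^sub>R proj u + (m * y) *\<^sub>R proj (perp u)"
    by (simp add: scaleR_add_right)
  hence "mexp (m *\<^sub>R (x *\<^sub>R proj u + y *\<^sub>R proj (perp u))) = exp (m * x) *\<^sub>R proj u + exp (m * y) *\<^sub>R proj (perp u)"
    using proj_PQ[OF u] by simp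
  thus ?thesis by (simp add: FF_def proj_def)
qed

lemma valid_pair: assumes u: "u \<noteq> 0" shows "valid [Dat x (1 / nrm u) u, Dat y (1 / nrm u) (perp u)]"
proof -
  have n: "nrm u > 0" using nrm_pos[OF u] .
  have "cr u (perp u) \<noteq> 0" unfolding cr_perp using n by simp
  thus ?thesis unfolding valid_def using u n perp_nz[OF u] by auto
qed

definition uA :: "real^2^2 \<Rightarrow> real^2" where
  "uA A = (SOME u. u \<noteq> 0 \<and> A = lam1 A *\<^sub>R proj u + lam2 A *\<^sub>R proj (perp u))"
definition datA :: "real^2^2 \<Rightarrow> dat list" where
  "datA A = [Dat (lam1 A) (1 / nrm (uA A)) (uA A), Dat (lam2 A) (1 / nrm (uA A)) (perp (uA A))]"

lemma uA: assumes "transpose A = A"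
  shows "uA A \<noteq> 0" "A = lam1 A *\<^sub>R proj (uA A) + lam2 A *\<^sub>R proj (perp (uA A))"
  using someI_ex[OF eig[OF assms]] unfolding uA_def by auto

lemma mexp_datA: "transpose A = A \<Longrightarrow> mexp (m *\<^sub>R A) = FF (datA A) m"
  using mexp_data[OF uA(1), of A m "lam1 A" "lam2 A"] uA(2)[of A] unfolding datA_def by metis

lemma valid_datA: "transpose A = A \<Longrightarrow> valid (datA A)"
  unfolding datA_def by (rule valid_pair[OF uA(1)])

definition DL :: "(real^2^2) list \<Rightarrow> dat list" where "DL xs = concat (map datA xs)"

lemma DL_append: "DL (xs @ ys) = DL xs @ DL ys" by (simp add: DL_def)

lemma FF_DL: "\<forall>A\<in>set xs. transpose A = A \<Longrightarrow>
   (\<Sum>\<^sub># (image_mset (\<lambda>Xi. mexp (m *\<^sub>R Xi)) (mset xs))) = FF (DL xs) m"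
proof (induction xs)
  case Nil thus ?case by (simp add: DL_def FF_nil)
next
  case (Cons a xs)
  have "DL (a # xs) = datA a @ DL xs" by (simp add: DL_def)
  thus ?case using Cons mexp_datA[of a m] by (simp add: FF_append)
qed

lemma valid_DL: "xs \<noteq> [] \<Longrightarrow> \<forall>A\<in>set xs. transpose A = A \<Longrightarrow> valid (DL xs)"
proof (induction xs)
  case Nil thus ?case by simp
next
  case (Cons a xs)
  have "DL (a # xs) = datA a @ DL xs" by (simp add: DL_def)
  moreover have "valid (datA a)" using Cons.prems by (simp add: valid_datA)
  ultimately show ?case
  proof (cases "xs = []")
    case True thus ?thesis using \<open>valid (datA a)\<close> by (simp add: DL_def)
  next
    case False
    hence "valid (DL xs)" using Cons by simp
    thus ?thesis using \<open>DL (a # xs) = datA a @ DL xs\<close> \<open>valid (datA a)\<close> by (simp add: valid_app)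
  qed
qed

lemma SupLE_DL: assumes "xs \<noteq> []" "\<forall>A\<in>set xs. transpose A = A"
  shows "SupLE (mset xs) = SS (DL xs)"
proof -
  have "((\<lambda>m::real. (1 / m) *\<^sub>R mlog (\<Sum>\<^sub># (image_mset (\<lambda>Xi. mexp (m *\<^sub>R Xi)) (mset xs))))
        \<longlongrightarrow> SS (DL xs)) at_top"
    unfolding FF_DL[OF assms(2)] by (rule limA[OF valid_DL[OF assms]])
  thus ?thesis unfolding SupLE_def by (rule tendsto_Lim[rotated]) simp
qed

lemma mexp_SS: "valid D \<Longrightarrow> mexp (m *\<^sub>R SS D) = FF (EE D) m"
  unfolding SS_def EE_def by (rule mexp_data[OF ut_nz])

lemma SupLE_pair: assumes "valid D1" "valid D2"
  shows "SupLE {# SS D1, SS D2 #} = SS (EE D1 @ EE D2)"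
proof -
  have "((\<lambda>m::real. (1 / m) *\<^sub>R mlog (\<Sum>\<^sub># (image_mset (\<lambda>Xi. mexp (m *\<^sub>R Xi)) {# SS D1, SS D2 #})))
        \<longlongrightarrow> SS (EE D1 @ EE D2)) at_top"
    using limA[OF valid_app[OF valid_EE[OF assms(1)] valid_EE[OF assms(2)]]]
    by (simp add: mexp_SS[OF assms(1)] mexp_SS[OF assms(2)] FF_append)
  thus ?thesis unfolding SupLE_def by (rule tendsto_Lim[rotated]) simp
qed

theorem proposition1:
  fixes X Y :: "(real^2^2) multiset"
  assumes "X \<noteq> {#}" and "Y \<noteq> {#}"
    and "\<forall>A \<in># X. transpose A = A"
    and "\<forall>A \<in># Y. transpose A = A"
  shows "SupLE (X + Y) = SupLE {# SupLE X, SupLE Y #}"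
proof -
  obtain xs where xs: "mset xs = X" using ex_mset by blast
  obtain ys where ys: "mset ys = Y" using ex_mset by blast
  have nx: "xs \<noteq> []" and ny: "ys \<noteq> []" using assms(1,2) xs ys by auto
  have sx: "\<forall>A\<in>set xs. transpose A = A" using assms(3) xs by auto
  have sy: "\<forall>A\<in>set ys. transpose A = A" using assms(4) ys by auto
  have sxy: "\<forall>A\<in>set (xs @ ys). transpose A = A" using sx sy by auto
  have nxy: "xs @ ys \<noteq> []" using nx by simp
  have "SupLE (X + Y) = SupLE (mset (xs @ ys))" using xs ys by simp
  also have "\<dots> = SS (DL xs @ DL ys)" using SupLE_DL[OF nxy sxy] by (simp add: DL_append)
  also have "\<dots> = SS (EE (DL xs) @ EE (DL ys))" by (rule transB[OF valid_DL[OF nx sx] valid_DL[OF ny sy]])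
  also have "\<dots> = SupLE {# SS (DL xs), SS (DL ys) #}" by (rule SupLE_pair[symmetric, OF valid_DL[OF nx sx] valid_DL[OF ny sy]])
  also have "\<dots> = SupLE {# SupLE X, SupLE Y #}" using SupLE_DL[OF nx sx] SupLE_DL[OF ny sy] xs ys by simp
  finally show ?thesis .
qed


end
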